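(* Define $\Delta:\mathcal{H}_{\mathbb{T}}\to\mathcal{H}_{\mathbb{T}}\otimes\mathcal{H}_{\mathbb{T}}$ linearly by, for $\mathcal{T}\in\mathbb{T}_n$, $$\Delta(\mathcal{T})=\sum_{O\in\mathcal{T}}\mathrm{Std}(\mathcal{T}_{\mid [n]\setminus O})\otimes \mathrm{Std}(\mathcal{T}_{\mid O}).$$ Then: (1) $(\mathcal{H}_{\mathbb{T}},.,\Delta)$ is a graded Hopf algebra; (2) $(\mathcal{H}_{\mathbb{T}},\downarrow,\Delta)$ is a graded infinitesimal bialgebra; (3) the involution $\iota$ defines a Hopf algebra isomorphism from $(\mathcal{H}_{\mathbb{T}},.,\Delta)$ to $(\mathcal{H}_{\mathbb{T}},.,\Delta^{op})$.
   Context: Let $K$ be a field. For $n\geq0$, $[n]=\{1,\ldots,n\}$, $\mathbb{T}_n$ is the set of topologies on $[n]$, and $\mathcal{H}_{\mathbb{T}}$ is the $K$-vector space with basis $\bigsqcup_{n\ge0}\mathbb{T}_n$, graded by giving elements of $\mathbb{T}_n$ degree $n$; the empty topology is denoted $1$. For $O\subseteq\mathbb{N}$, $O(+n)=\{k+n\mid k\in O\}$. Products: for $\mathcal{T}\in\mathbb{T}_n,\mathcal{T}'\in\mathbb{T}_{n'}$, $\mathcal{T}.\mathcal{T}'$ is the topology on $[n+n']$ with open sets $O\sqcup O'(+n)$ ($O\in\mathcal{T},O'\in\mathcal{T}'$), and $\mathcal{T}\downarrow\mathcal{T}'$ is the topology on $[n+n']$ with open sets $O\sqcup[n'](+n)$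 ($O\in\mathcal{T}$) and $O'(+n)$ ($O'\in\mathcal{T}'$), both extended bilinearly (associative, unit $1$). For a topology $\mathcal{T}$ on a finite set $X$ and $Y\subseteq X$, $\mathcal{T}_{\mid Y}=\{O\cap Y\mid O\in\mathcal{T}\}$. If $X$ is a totally ordered set of cardinality $m$, $\mathrm{Std}(\mathcal{T})\in\mathbb{T}_m$ is the image of $\mathcal{T}$ under the unique increasing bijection $X\to[m]$. The involution $\iota$ is defined on basis elements by $\iota(\mathcal{T})=\{X\setminus O\mid O\in\mathcal{T}\}$ and extended linearly. An infinitesimal bialgebra is a triple $(A,m,\Delta)$ where $(A,m)$ is a unital associative algebra, $(A,\Delta)$ a counital coassociative coalgebra, and $\Delta(xy)=(x\otimes1)\Delta(y)+\Delta(x)(1\otimes y)-x\otimes y$ for all $x,y$. *)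

theory Defs
  imports "HOL-Library.Poly_Mapping"
begin

definition is_topo :: "nat \<Rightarrow> nat set set \<Rightarrow> bool" where
  "is_topo n T \<longleftrightarrow> T \<subseteq> Pow {1..n} \<and> {} \<in> T \<and> {1..n} \<in> T \<and>
     (\<forall>A\<in>T. \<forall>B\<in>T. A \<union> B \<in> T \<and> A \<inter> B \<in> T)"

typedef ftop = "{(n, T). is_topo n T}"
  by (rule exI[of _ "(0, {{}})"]) (auto simp: is_topo_def)

definition deg :: "ftop \<Rightarrow> nat" where "deg t = fst (Rep_ftop t)"
definition opens :: "ftop \<Rightarrow> nat set set" where "opens t = snd (Rep_ftop t)"

definition shift :: "nat set \<Rightarrow> nat \<Rightarrow> nat set" where "shift U k = (\<lambda>x. x + k) ` U"

definition top_one :: ftop where "top_one = Abs_ftop (0, {{}})"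

definition top_dot :: "ftop \<Rightarrow> ftop \<Rightarrow> ftop" where
  "top_dot t t' = Abs_ftop (deg t + deg t',
     {U \<union> shift U' (deg t) | U U'. U \<in> opens t \<and> U' \<in> opens t'})"

definition top_down :: "ftop \<Rightarrow> ftop \<Rightarrow> ftop" where
  "top_down t t' = Abs_ftop (deg t + deg t',
     {U \<union> shift {1..deg t'} (deg t) | U. U \<in> opens t} \<union> {shift U' (deg t) | U'. U' \<in> opens t'})"

text \<open>Std of the restriction of t to Y: the increasing bijection Y -> [card Y] is x |-> card {y in Y. y <= x}.\<close>
definition std_map :: "nat set \<Rightarrow> nat \<Rightarrow> nat" where
  "std_map Y x = card {y \<in> Y. y \<le> x}"

definition std_restr :: "ftop \<Rightarrow> nat set \<Rightarrow> ftop" where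
  "std_restr t Y = Abs_ftop (card Y, {std_map Y ` (U \<inter> Y) | U. U \<in> opens t})"

definition top_iota :: "ftop \<Rightarrow> ftop" where
  "top_iota t = Abs_ftop (deg t, {{1..deg t} - U | U. U \<in> opens t})"

text \<open>The space with basis a over K is the space of finitely supported functions; the tensor product of the spaces with bases
  'a and 'b is identified with the space with basis the product of the bases.\<close>

definition smul :: "'k \<Rightarrow> ('a \<Rightarrow>\<^sub>0 'k) \<Rightarrow> ('a \<Rightarrow>\<^sub>0 'k::semiring_0)" where
  "smul c p = Poly_Mapping.map (\<lambda>x. c * x) p"

definition lin :: "('a \<Rightarrow> ('b \<Rightarrow>\<^sub>0 'k::semiring_0)) \<Rightarrow> ('a \<Rightarrow>\<^sub>0 'k) \<Rightarrow> ('b \<Rightarrow>\<^sub>0 'k)" where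
  "lin \<phi> f = (\<Sum>a\<in>Poly_Mapping.keys f. smul (Poly_Mapping.lookup f a) (\<phi> a))"

definition linfun :: "('a \<Rightarrow> 'k::semiring_0) \<Rightarrow> ('a \<Rightarrow>\<^sub>0 'k) \<Rightarrow> 'k" where
  "linfun e f = (\<Sum>a\<in>Poly_Mapping.keys f. Poly_Mapping.lookup f a * e a)"

definition bilin :: "('a \<Rightarrow> 'b \<Rightarrow> ('c \<Rightarrow>\<^sub>0 'k::semiring_0)) \<Rightarrow> ('a \<Rightarrow>\<^sub>0 'k) \<Rightarrow> ('b \<Rightarrow>\<^sub>0 'k) \<Rightarrow> ('c \<Rightarrow>\<^sub>0 'k)" where
  "bilin \<mu> f g = lin (\<lambda>a. lin (\<lambda>b. \<mu> a b) g) f"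

definition bvec :: "'a \<Rightarrow> ('a \<Rightarrow>\<^sub>0 'k::semiring_1)" where
  "bvec a = Poly_Mapping.single a 1"

definition tens :: "('a \<Rightarrow>\<^sub>0 'k::semiring_1) \<Rightarrow> ('b \<Rightarrow>\<^sub>0 'k) \<Rightarrow> ('a \<times> 'b \<Rightarrow>\<^sub>0 'k)" where
  "tens u v = bilin (\<lambda>a b. bvec (a, b)) u v"

definition tmap :: "(('a \<Rightarrow>\<^sub>0 'k::semiring_1) \<Rightarrow> ('c \<Rightarrow>\<^sub>0 'k)) \<Rightarrow> (('b \<Rightarrow>\<^sub>0 'k) \<Rightarrow> ('d \<Rightarrow>\<^sub>0 'k))
     \<Rightarrow> ('a \<times> 'b \<Rightarrow>\<^sub>0 'k) \<Rightarrow> ('c \<times> 'd \<Rightarrow>\<^sub>0 'k)" where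
  "tmap F G = lin (\<lambda>(a, b). tens (F (bvec a)) (G (bvec b)))"

definition alg_mult :: "('a \<Rightarrow> 'a \<Rightarrow> 'a) \<Rightarrow> ('a \<Rightarrow>\<^sub>0 'k::semiring_1) \<Rightarrow> ('a \<Rightarrow>\<^sub>0 'k) \<Rightarrow> ('a \<Rightarrow>\<^sub>0 'k)" where
  "alg_mult mu = bilin (\<lambda>a b. bvec (mu a b))"

definition tens_mult :: "(('a \<Rightarrow>\<^sub>0 'k::semiring_1) \<Rightarrow> ('a \<Rightarrow>\<^sub>0 'k) \<Rightarrow> ('a \<Rightarrow>\<^sub>0 'k))
     \<Rightarrow> ('a \<times> 'a \<Rightarrow>\<^sub>0 'k) \<Rightarrow> ('a \<times> 'a \<Rightarrow>\<^sub>0 'k) \<Rightarrow> ('a \<times> 'a \<Rightarrow>\<^sub>0 'k)" where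
  "tens_mult m = bilin (\<lambda>(a, b) (c, d). tens (m (bvec a) (bvec c)) (m (bvec b) (bvec d)))"

definition tflip :: "('a \<times> 'b \<Rightarrow>\<^sub>0 'k::semiring_1) \<Rightarrow> ('b \<times> 'a \<Rightarrow>\<^sub>0 'k)" where
  "tflip = lin (\<lambda>(a, b). bvec (b, a))"

definition unital_assoc :: "('a \<Rightarrow> 'a \<Rightarrow> 'a) \<Rightarrow> 'a \<Rightarrow> 'k::field itself \<Rightarrow> bool" where
  "unital_assoc mu e (_ :: 'k itself) \<longleftrightarrow>
     (\<forall>x y z :: 'a \<Rightarrow>\<^sub>0 'k. alg_mult mu (alg_mult mu x y) z = alg_mult mu x (alg_mult mu y z)) \<and>
     (\<forall>x :: 'a \<Rightarrow>\<^sub>0 'k. alg_mult mu (bvec e) x = x \<and> alg_mult mu x (bvec e) = x)"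

definition coassoc :: "('a \<Rightarrow> ('a \<times> 'a \<Rightarrow>\<^sub>0 'k::field)) \<Rightarrow> bool" where
  "coassoc delta \<longleftrightarrow> (\<forall>x a b c.
     Poly_Mapping.lookup (tmap (lin delta) id (lin delta x)) ((a, b), c) =
     Poly_Mapping.lookup (tmap id (lin delta) (lin delta x)) (a, (b, c)))"

definition is_counit :: "('a \<Rightarrow> ('a \<times> 'a \<Rightarrow>\<^sub>0 'k::field)) \<Rightarrow> ('a \<Rightarrow> 'k) \<Rightarrow> bool" where
  "is_counit delta eps \<longleftrightarrow> (\<forall>x.
     lin (\<lambda>(a, b). smul (eps a) (bvec b)) (lin delta x) = x \<and>
     lin (\<lambda>(a, b). smul (eps b) (bvec a)) (lin delta x) = x)"

definition counital_coalg :: "('a \<Rightarrow> ('a \<times> 'a \<Rightarrow>\<^sub>0 'k::field)) \<Rightarrow> bool" where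
  "counital_coalg delta \<longleftrightarrow> coassoc delta \<and> (\<exists>eps. is_counit delta eps)"

definition bialgebra :: "('a \<Rightarrow> 'a \<Rightarrow> 'a) \<Rightarrow> 'a \<Rightarrow> ('a \<Rightarrow> ('a \<times> 'a \<Rightarrow>\<^sub>0 'k::field)) \<Rightarrow> bool" where
  "bialgebra mu e delta \<longleftrightarrow> unital_assoc mu e TYPE('k) \<and> counital_coalg delta \<and>
     (\<forall>x y. lin delta (alg_mult mu x y) = tens_mult (alg_mult mu) (lin delta x) (lin delta y)) \<and>
     lin delta (bvec e) = tens (bvec e) (bvec e) \<and>
     (\<exists>eps. is_counit delta eps \<and> eps e = 1 \<and>
        (\<forall>x y. linfun eps (alg_mult mu x y) = linfun eps x * linfun eps y))"

definition hopf_algebra :: "('a \<Rightarrow> 'a \<Rightarrow> 'a) \<Rightarrow> 'a \<Rightarrow> ('a \<Rightarrow> ('a \<times> 'a \<Rightarrow>\<^sub>0 'k::field)) \<Rightarrow> bool" where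
  "hopf_algebra mu e delta \<longleftrightarrow> bialgebra mu e delta \<and>
     (\<exists>eps (S :: 'a \<Rightarrow> ('a \<Rightarrow>\<^sub>0 'k)). is_counit delta eps \<and>
        (\<forall>x. lin (\<lambda>(a, b). alg_mult mu (S a) (bvec b)) (lin delta x) = smul (linfun eps x) (bvec e) \<and>
             lin (\<lambda>(a, b). alg_mult mu (bvec a) (S b)) (lin delta x) = smul (linfun eps x) (bvec e)))"

definition graded :: "('a \<Rightarrow> nat) \<Rightarrow> ('a \<Rightarrow> 'a \<Rightarrow> 'a) \<Rightarrow> 'a \<Rightarrow> ('a \<Rightarrow> ('a \<times> 'a \<Rightarrow>\<^sub>0 'k::field)) \<Rightarrow> bool" where
  "graded dg mu e delta \<longleftrightarrow> dg e = 0 \<and> (\<forall>a b. dg (mu a b) = dg a + dg b) \<and>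
     (\<forall>a c d. (c, d) \<in> Poly_Mapping.keys (delta a) \<longrightarrow> dg c + dg d = dg a)"

definition infinitesimal_bialgebra :: "('a \<Rightarrow> 'a \<Rightarrow> 'a) \<Rightarrow> 'a \<Rightarrow> ('a \<Rightarrow> ('a \<times> 'a \<Rightarrow>\<^sub>0 'k::field)) \<Rightarrow> bool" where
  "infinitesimal_bialgebra mu e delta \<longleftrightarrow> unital_assoc mu e TYPE('k) \<and> counital_coalg delta \<and>
     (\<forall>x y. lin delta (alg_mult mu x y) =
        tens_mult (alg_mult mu) (tens x (bvec e)) (lin delta y)
        + tens_mult (alg_mult mu) (lin delta x) (tens (bvec e) y)
        - tens x y)"

definition hopf_iso :: "('a \<Rightarrow> 'a \<Rightarrow> 'a) \<Rightarrow> 'a \<Rightarrow> ('a \<Rightarrow> ('a \<times> 'a \<Rightarrow>\<^sub>0 'k::field))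
    \<Rightarrow> ('a \<Rightarrow> 'a \<Rightarrow> 'a) \<Rightarrow> 'a \<Rightarrow> ('a \<Rightarrow> ('a \<times> 'a \<Rightarrow>\<^sub>0 'k)) \<Rightarrow> ('a \<Rightarrow> ('a \<Rightarrow>\<^sub>0 'k)) \<Rightarrow> bool" where
  "hopf_iso mu e delta mu' e' delta' phi \<longleftrightarrow>
     hopf_algebra mu e delta \<and> hopf_algebra mu' e' delta' \<and> bij (lin phi) \<and>
     (\<forall>x y. lin phi (alg_mult mu x y) = alg_mult mu' (lin phi x) (lin phi y)) \<and>
     lin phi (bvec e) = bvec e' \<and>
     (\<forall>x. tmap (lin phi) (lin phi) (lin delta x) = lin delta' (lin phi x))"

definition top_delta :: "ftop \<Rightarrow> (ftop \<times> ftop \<Rightarrow>\<^sub>0 'k::field)" where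
  "top_delta t = (\<Sum>U\<in>opens t. bvec (std_restr t ({1..deg t} - U), std_restr t U))"

definition top_delta_op :: "ftop \<Rightarrow> (ftop \<times> ftop \<Rightarrow>\<^sub>0 'k::field)" where
  "top_delta_op t = tflip (top_delta t)"

end

theory Submission
  imports Defs
begin

lemma lookup_smul[simp]: "Poly_Mapping.lookup (smul c p) a = c * Poly_Mapping.lookup p a"
  unfolding smul_def by (simp add: map.rep_eq when_def)

lemma lookup_bvec: "Poly_Mapping.lookup (bvec a) b = (if a = b then 1 else 0)"
  unfolding bvec_def by (simp add: lookup_single when_def)

lemma keys_bvec[simp]: "Poly_Mapping.keys (bvec a :: _ \<Rightarrow>\<^sub>0 'k::field) = {a}"
  unfolding bvec_def by simp

lemma smul_zero_left[simp]: "smul 0 p = 0"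
  by (rule poly_mapping_eqI) simp
lemma smul_zero_right[simp]: "smul c (0 :: _ \<Rightarrow>\<^sub>0 'k::field) = 0"
  by (rule poly_mapping_eqI) simp
lemma smul_one[simp]: "smul 1 (p :: _ \<Rightarrow>\<^sub>0 'k::field) = p"
  by (rule poly_mapping_eqI) simp
lemma smul_add_left: "smul (c + d) (p :: _ \<Rightarrow>\<^sub>0 'k::field) = smul c p + smul d p"
  by (rule poly_mapping_eqI) (simp add: lookup_add algebra_simps)
lemma smul_add_right: "smul c (p + q :: _ \<Rightarrow>\<^sub>0 'k::field) = smul c p + smul c q"
  by (rule poly_mapping_eqI) (simp add: lookup_add algebra_simps)
lemma smul_smul: "smul c (smul d (p :: _ \<Rightarrow>\<^sub>0 'k::field)) = smul (c * d) p"
  by (rule poly_mapping_eqI) (simp add: algebra_simps)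
lemma smul_uminus_right: "smul c (- p :: _ \<Rightarrow>\<^sub>0 'k::field) = - smul c p"
  by (rule poly_mapping_eqI) simp
lemma smul_diff_right: "smul c (p - q :: _ \<Rightarrow>\<^sub>0 'k::field) = smul c p - smul c q"
  by (rule poly_mapping_eqI) (simp add: lookup_minus algebra_simps)
lemma smul_sum_right: "smul c (\<Sum>i\<in>I. f i :: _ \<Rightarrow>\<^sub>0 'k::field) = (\<Sum>i\<in>I. smul c (f i))"
  by (rule poly_mapping_eqI) (simp add: lookup_sum sum_distrib_left)

lemma keys_smul: "Poly_Mapping.keys (smul c (p :: _ \<Rightarrow>\<^sub>0 'k::field)) \<subseteq> Poly_Mapping.keys p"
  by (auto simp: in_keys_iff)

lemma lin_superset:
  fixes f :: "'a \<Rightarrow>\<^sub>0 'k::field"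
  assumes "finite S" "Poly_Mapping.keys f \<subseteq> S"
  shows "lin \<phi> f = (\<Sum>a\<in>S. smul (Poly_Mapping.lookup f a) (\<phi> a))"
  unfolding lin_def
  by (rule sum.mono_neutral_left) (use assms in \<open>auto simp: in_keys_iff\<close>)

lemma lin_add: "lin \<phi> (f + g :: _ \<Rightarrow>\<^sub>0 'k::field) = lin \<phi> f + lin \<phi> g"
proof -
  let ?S = "Poly_Mapping.keys f \<union> Poly_Mapping.keys g"
  have "lin \<phi> (f + g) = (\<Sum>a\<in>?S. smul (Poly_Mapping.lookup (f+g) a) (\<phi> a))"
    by (rule lin_superset) (auto dest: keys_add[THEN subsetD])
  also have "\<dots> = (\<Sum>a\<in>?S. smul (Poly_Mapping.lookup f a) (\<phi> a)) + (\<Sum>a\<in>?S. smul (Poly_Mapping.lookup g a) (\<phi> a))"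
    by (simp add: lookup_add smul_add_left sum.distrib)
  also have "\<dots> = lin \<phi> f + lin \<phi> g"
    by (subst (1 2) lin_superset[of ?S]) auto
  finally show ?thesis .
qed

lemma lin_zero[simp]: "lin \<phi> (0 :: _ \<Rightarrow>\<^sub>0 'k::field) = 0"
  unfolding lin_def by simp

lemma lin_smul: "lin \<phi> (smul c f :: _ \<Rightarrow>\<^sub>0 'k::field) = smul c (lin \<phi> f)"
proof -
  have "lin \<phi> (smul c f) = (\<Sum>a\<in>Poly_Mapping.keys f. smul (Poly_Mapping.lookup (smul c f) a) (\<phi> a))"
    by (rule lin_superset) (auto simp: keys_smul)
  then show ?thesis by (simp add: lin_def smul_sum_right smul_smul)
qed

lemma lin_uminus: "lin \<phi> (- f :: _ \<Rightarrow>\<^sub>0 'k::field) = - lin \<phi> f"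
  using lin_add[of \<phi> f "-f"] by (simp add: eq_neg_iff_add_eq_0 add.commute)

lemma lin_diff: "lin \<phi> (f - g :: _ \<Rightarrow>\<^sub>0 'k::field) = lin \<phi> f - lin \<phi> g"
  using lin_add[of \<phi> f "-g"] lin_uminus[of \<phi> g] by simp

lemma lin_sum: "lin \<phi> (\<Sum>i\<in>I. f i :: _ \<Rightarrow>\<^sub>0 'k::field) = (\<Sum>i\<in>I. lin \<phi> (f i))"
  by (induction I rule: infinite_finite_induct) (auto simp: lin_add)

lemma lin_bvec[simp]: "lin \<phi> (bvec a :: _ \<Rightarrow>\<^sub>0 'k::field) = \<phi> a"
  unfolding lin_def by (simp add: lookup_bvec)

lemma lookup_lin: "Poly_Mapping.lookup (lin \<phi> (f :: _ \<Rightarrow>\<^sub>0 'k::field)) k =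
   (\<Sum>a\<in>Poly_Mapping.keys f. Poly_Mapping.lookup f a * Poly_Mapping.lookup (\<phi> a) k)"
  unfolding lin_def by (simp add: lookup_sum)

lemma lin_lin: "lin \<psi> (lin \<phi> (f :: _ \<Rightarrow>\<^sub>0 'k::field)) = lin (\<lambda>a. lin \<psi> (\<phi> a)) f"
  by (simp only: lin_def[of \<phi> f] lin_def[of "\<lambda>a. lin \<psi> (\<phi> a)" f] lin_sum lin_smul)

lemma lin_bvec_id[simp]: "lin bvec (f :: _ \<Rightarrow>\<^sub>0 'k::field) = f"
proof (rule poly_mapping_eqI)
  fix k
  have "Poly_Mapping.lookup (lin bvec f) k = (\<Sum>a\<in>Poly_Mapping.keys f. (if a = k then Poly_Mapping.lookup f a else 0))"
    by (simp add: lookup_lin lookup_bvec if_distrib cong: if_cong)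
  also have "\<dots> = Poly_Mapping.lookup f k"
    by (simp add: in_keys_iff)
  finally show "Poly_Mapping.lookup (lin bvec f) k = Poly_Mapping.lookup f k" .
qed

lemma lin_cong: "(\<And>a. a \<in> Poly_Mapping.keys f \<Longrightarrow> \<phi> a = \<psi> a) \<Longrightarrow> lin \<phi> f = lin \<psi> f"
  unfolding lin_def by (rule sum.cong) auto

lemma lin_ext: "(\<And>a. \<phi> a = \<psi> a) \<Longrightarrow> lin \<phi> f = lin \<psi> f"
  by (rule lin_cong) auto

lemma lin_fun_add: "lin (\<lambda>a. \<phi> a + \<psi> a) (f :: _ \<Rightarrow>\<^sub>0 'k::field) = lin \<phi> f + lin \<psi> f"
  unfolding lin_def by (simp add: smul_add_right sum.distrib)

lemma lin_fun_zero[simp]: "lin (\<lambda>a. 0) (f :: _ \<Rightarrow>\<^sub>0 'k::field) = (0 :: _ \<Rightarrow>\<^sub>0 'k)"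
  unfolding lin_def by simp

lemma lin_fun_uminus: "lin (\<lambda>a. - \<phi> a) (f :: _ \<Rightarrow>\<^sub>0 'k::field) = - lin \<phi> f"
  unfolding lin_def by (simp add: smul_uminus_right sum_negf)

lemma lin_fun_diff: "lin (\<lambda>a. \<phi> a - \<psi> a) (f :: _ \<Rightarrow>\<^sub>0 'k::field) = lin \<phi> f - lin \<psi> f"
  unfolding lin_def by (simp add: smul_diff_right sum_subtractf)

lemma lin_fun_smul: "lin (\<lambda>a. smul c (\<phi> a)) (f :: _ \<Rightarrow>\<^sub>0 'k::field) = smul c (lin \<phi> f)"
  unfolding lin_def by (simp add: smul_sum_right smul_smul mult.commute)

lemma lin_fun_sum: "lin (\<lambda>a. \<Sum>i\<in>I. \<phi> i a) (f :: _ \<Rightarrow>\<^sub>0 'k::field) = (\<Sum>i\<in>I. lin (\<phi> i) f)"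
  unfolding lin_def by (simp add: smul_sum_right sum.swap[of _ I])

lemma bilin_lin1: "bilin \<mu> (lin \<phi> x) (y :: _ \<Rightarrow>\<^sub>0 'k::field) = lin (\<lambda>a. bilin \<mu> (\<phi> a) y) x"
  unfolding bilin_def by (simp add: lin_lin)

lemma bilin_swap: "bilin \<mu> x (y :: _ \<Rightarrow>\<^sub>0 'k::field) = lin (\<lambda>b. lin (\<lambda>a. \<mu> a b) x) y"
proof -
  have "bilin \<mu> x y = (\<Sum>a\<in>Poly_Mapping.keys x. \<Sum>b\<in>Poly_Mapping.keys y.
          smul (Poly_Mapping.lookup x a * Poly_Mapping.lookup y b) (\<mu> a b))"
    by (simp add: bilin_def lin_def smul_sum_right smul_smul)
  also have "\<dots> = (\<Sum>b\<in>Poly_Mapping.keys y. \<Sum>a\<in>Poly_Mapping.keys x.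
          smul (Poly_Mapping.lookup y b * Poly_Mapping.lookup x a) (\<mu> a b))"
    by (subst sum.swap) (simp add: mult.commute)
  also have "\<dots> = lin (\<lambda>b. lin (\<lambda>a. \<mu> a b) x) y"
    by (simp add: lin_def smul_sum_right smul_smul)
  finally show ?thesis .
qed

lemma bilin_lin2: "bilin \<mu> x (lin \<phi> (y :: _ \<Rightarrow>\<^sub>0 'k::field)) = lin (\<lambda>b. bilin \<mu> x (\<phi> b)) y"
  by (simp add: bilin_swap[of \<mu> x] lin_lin)

lemma bilin_bvec[simp]: "bilin \<mu> (bvec a) (bvec b :: _ \<Rightarrow>\<^sub>0 'k::field) = \<mu> a b"
  unfolding bilin_def by simp

lemma bilin_bvec1: "bilin \<mu> (bvec a) (y :: _ \<Rightarrow>\<^sub>0 'k::field) = lin (\<mu> a) y"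
  unfolding bilin_def by simp

lemma bilin_bvec2: "bilin \<mu> x (bvec b :: _ \<Rightarrow>\<^sub>0 'k::field) = lin (\<lambda>a. \<mu> a b) x"
  unfolding bilin_def by simp

lemma bilin_add1: "bilin \<mu> (x + x') (y :: _ \<Rightarrow>\<^sub>0 'k::field) = bilin \<mu> x y + bilin \<mu> x' y"
  unfolding bilin_def by (simp add: lin_add)
lemma bilin_add2: "bilin \<mu> x (y + y' :: _ \<Rightarrow>\<^sub>0 'k::field) = bilin \<mu> x y + bilin \<mu> x y'"
  unfolding bilin_swap[of \<mu> x] by (simp add: lin_add)
lemma bilin_sum1: "bilin \<mu> (\<Sum>i\<in>I. x i) (y :: _ \<Rightarrow>\<^sub>0 'k::field) = (\<Sum>i\<in>I. bilin \<mu> (x i) y)"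
  unfolding bilin_def by (simp add: lin_sum)
lemma bilin_sum2: "bilin \<mu> x (\<Sum>i\<in>I. y i :: _ \<Rightarrow>\<^sub>0 'k::field) = (\<Sum>i\<in>I. bilin \<mu> x (y i))"
  unfolding bilin_swap[of \<mu> x] by (simp add: lin_sum)
lemma bilin_smul1: "bilin \<mu> (smul c x) (y :: _ \<Rightarrow>\<^sub>0 'k::field) = smul c (bilin \<mu> x y)"
  unfolding bilin_def by (simp add: lin_smul)
lemma bilin_smul2: "bilin \<mu> x (smul c y :: _ \<Rightarrow>\<^sub>0 'k::field) = smul c (bilin \<mu> x y)"
  unfolding bilin_swap[of \<mu> x] by (simp add: lin_smul)
lemma bilin_zero1[simp]: "bilin \<mu> 0 (y :: _ \<Rightarrow>\<^sub>0 'k::field) = 0"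
  unfolding bilin_def by simp
lemma bilin_zero2[simp]: "bilin \<mu> x (0 :: _ \<Rightarrow>\<^sub>0 'k::field) = 0"
  unfolding bilin_swap[of \<mu> x] by simp
lemma bilin_uminus1: "bilin \<mu> (- x) (y :: _ \<Rightarrow>\<^sub>0 'k::field) = - bilin \<mu> x y"
  unfolding bilin_def by (simp add: lin_uminus)
lemma bilin_uminus2: "bilin \<mu> x (- y :: _ \<Rightarrow>\<^sub>0 'k::field) = - bilin \<mu> x y"
  unfolding bilin_swap[of \<mu> x] by (simp add: lin_uminus)

lemma linfun_superset:
  fixes f :: "'a \<Rightarrow>\<^sub>0 'k::field"
  assumes "finite S" "Poly_Mapping.keys f \<subseteq> S"
  shows "linfun e f = (\<Sum>a\<in>S. Poly_Mapping.lookup f a * e a)"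
  unfolding linfun_def
  by (rule sum.mono_neutral_left) (use assms in \<open>auto simp: in_keys_iff\<close>)

lemma linfun_add: "linfun e (f + g :: _ \<Rightarrow>\<^sub>0 'k::field) = linfun e f + linfun e g"
proof -
  let ?S = "Poly_Mapping.keys f \<union> Poly_Mapping.keys g"
  have "linfun e (f + g) = (\<Sum>a\<in>?S. Poly_Mapping.lookup (f+g) a * e a)"
    by (rule linfun_superset) (auto dest: keys_add[THEN subsetD])
  also have "\<dots> = (\<Sum>a\<in>?S. Poly_Mapping.lookup f a * e a) + (\<Sum>a\<in>?S. Poly_Mapping.lookup g a * e a)"
    by (simp add: lookup_add algebra_simps sum.distrib)
  also have "\<dots> = linfun e f + linfun e g"
    by (subst (1 2) linfun_superset[of ?S]) auto
  finally show ?thesis .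
qed

lemma linfun_zero[simp]: "linfun e (0 :: _ \<Rightarrow>\<^sub>0 'k::field) = 0"
  unfolding linfun_def by simp

lemma linfun_smul: "linfun e (smul c f :: _ \<Rightarrow>\<^sub>0 'k::field) = c * linfun e f"
proof -
  have "linfun e (smul c f) = (\<Sum>a\<in>Poly_Mapping.keys f. Poly_Mapping.lookup (smul c f) a * e a)"
    by (rule linfun_superset) (auto simp: keys_smul)
  then show ?thesis by (simp add: linfun_def sum_distrib_left mult.assoc)
qed

lemma linfun_sum: "linfun e (\<Sum>i\<in>I. f i :: _ \<Rightarrow>\<^sub>0 'k::field) = (\<Sum>i\<in>I. linfun e (f i))"
  by (induction I rule: infinite_finite_induct) (auto simp: linfun_add)

lemma linfun_bvec[simp]: "linfun e (bvec a :: _ \<Rightarrow>\<^sub>0 'k::field) = e a"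
  unfolding linfun_def by (simp add: lookup_bvec)

lemma linfun_lin: "linfun e (lin \<phi> (f :: _ \<Rightarrow>\<^sub>0 'k::field)) = linfun (\<lambda>a. linfun e (\<phi> a)) f"
  by (simp only: lin_def[of \<phi> f] linfun_def[of "\<lambda>a. linfun e (\<phi> a)" f] linfun_sum linfun_smul)

lemma linfun_fun_mult: "linfun (\<lambda>a. e a * c) (f :: _ \<Rightarrow>\<^sub>0 'k::field) = linfun e f * c"
  unfolding linfun_def by (simp add: sum_distrib_right mult.assoc)

lemma linfun_ext: "(\<And>a. e a = e' a) \<Longrightarrow> linfun e f = linfun e' f"
  unfolding linfun_def by simp

lemma smul_linfun: "smul (linfun e x) v = lin (\<lambda>a. smul (e a) (v :: _ \<Rightarrow>\<^sub>0 'k::field)) x"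
proof (rule poly_mapping_eqI)
  fix k show "Poly_Mapping.lookup (smul (linfun e x) v) k = Poly_Mapping.lookup (lin (\<lambda>a. smul (e a) v) x) k"
    by (simp add: lookup_lin linfun_def sum_distrib_right mult.assoc)
qed

lemma lin_expand: "lin \<phi> (x :: _ \<Rightarrow>\<^sub>0 'k::field) = lin (\<lambda>a. lin \<phi> (bvec a)) x"
  by simp

lemma topo_Rep: "is_topo (deg t) (opens t)"
proof -
  have "Rep_ftop t \<in> {(n, T). is_topo n T}" by (rule Rep_ftop)
  then show ?thesis unfolding deg_def opens_def by (simp add: case_prod_beta)
qed

lemma topo_Abs:
  assumes "is_topo n T" shows "deg (Abs_ftop (n, T)) = n" "opens (Abs_ftop (n, T)) = T"
  using Abs_ftop_inverse[of "(n,T)"] assms unfolding deg_def opens_def by auto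

lemma ftop_eqI: "deg t = deg s \<Longrightarrow> opens t = opens s \<Longrightarrow> t = s"
  using Rep_ftop_inject[of t s] unfolding deg_def opens_def by (simp add: prod_eq_iff)

lemma opens_sub: "U \<in> opens t \<Longrightarrow> U \<subseteq> {1..deg t}"
  using topo_Rep[of t] unfolding is_topo_def by auto
lemma opens_empty[simp]: "{} \<in> opens t"
  using topo_Rep[of t] unfolding is_topo_def by auto
lemma opens_full[simp]: "{1..deg t} \<in> opens t"
  using topo_Rep[of t] unfolding is_topo_def by auto
lemma opens_Un: "U \<in> opens t \<Longrightarrow> V \<in> opens t \<Longrightarrow> U \<union> V \<in> opens t"
  using topo_Rep[of t] unfolding is_topo_def by auto
lemma opens_Int: "U \<in> opens t \<Longrightarrow> V \<in> opens t \<Longrightarrow> U \<inter> V \<in> opens t"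
  using topo_Rep[of t] unfolding is_topo_def by auto
lemma finite_opens[simp]: "finite (opens t)"
proof -
  have "opens t \<subseteq> Pow {1..deg t}" using opens_sub by auto
  then show ?thesis by (rule finite_subset) simp
qed
lemma finite_open: "U \<in> opens t \<Longrightarrow> finite U"
  using opens_sub finite_subset by blast

lemma topo_one: "is_topo 0 {{}}" by (auto simp: is_topo_def)
lemma deg_one[simp]: "deg top_one = 0" and opens_one[simp]: "opens top_one = {{}}"
  using topo_Abs[OF topo_one] unfolding top_one_def by auto

lemma deg0_one: "deg t = 0 \<Longrightarrow> t = top_one"
  apply (rule ftop_eqI)
  using opens_sub[of _ t] opens_empty[of t] by auto

lemma std_mono:
  assumes "finite Y" "x \<in> Y" "y \<in> Y" "x < y"
  shows "std_map Y x < std_map Y y"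
  unfolding std_map_def
proof (rule psubset_card_mono)
  show "finite {z \<in> Y. z \<le> y}" using assms by auto
  have "y \<in> {z \<in> Y. z \<le> y}" "y \<notin> {z \<in> Y. z \<le> x}" using assms by auto
  moreover have "{z \<in> Y. z \<le> x} \<subseteq> {z \<in> Y. z \<le> y}" using assms by auto
  ultimately show "{z \<in> Y. z \<le> x} \<subset> {z \<in> Y. z \<le> y}" by (intro psubsetI) auto
qed

lemma std_le_iff:
  assumes "finite Y" "x \<in> Y" "y \<in> Y"
  shows "std_map Y x \<le> std_map Y y \<longleftrightarrow> x \<le> y"
  using std_mono[OF assms(1,2,3)] std_mono[OF assms(1,3,2)]
  by (metis linorder_not_le nat_less_le)

lemma std_inj: "finite Y \<Longrightarrow> inj_on (std_map Y) Y"
  unfolding inj_on_def using std_le_iff by (metis order_antisym order_refl)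

lemma std_pos: "finite Y \<Longrightarrow> x \<in> Y \<Longrightarrow> 1 \<le> std_map Y x"
proof -
  assume a: "finite Y" "x \<in> Y"
  then have "card {y \<in> Y. y \<le> x} > 0" by (subst card_gt_0_iff) auto
  then show ?thesis unfolding std_map_def by simp
qed

lemma std_le_card: "finite Y \<Longrightarrow> std_map Y x \<le> card Y"
  unfolding std_map_def by (rule card_mono) auto

lemma std_range: assumes "finite Y" shows "std_map Y ` Y = {1..card Y}"
proof (rule card_subset_eq)
  show "std_map Y ` Y \<subseteq> {1..card Y}" using std_pos std_le_card assms by auto
  show "card (std_map Y ` Y) = card {1..card Y}" using card_image[OF std_inj[OF assms]] by simp
qed simp

lemma std_comp:
  assumes "finite Y" "Z \<subseteq> Y" "x \<in> Z"
  shows "std_map (std_map Y ` Z) (std_map Y x) = std_map Z x"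
proof -
  have "{w \<in> std_map Y ` Z. w \<le> std_map Y x} = std_map Y ` {z \<in> Z. z \<le> x}"
  proof (rule set_eqI, rule iffI)
    fix w assume "w \<in> {w \<in> std_map Y ` Z. w \<le> std_map Y x}"
    then obtain z where "z \<in> Z" "w = std_map Y z" "std_map Y z \<le> std_map Y x" by auto
    then show "w \<in> std_map Y ` {z \<in> Z. z \<le> x}" using assms std_le_iff[OF assms(1), of z x] by auto
  next
    fix w assume "w \<in> std_map Y ` {z \<in> Z. z \<le> x}"
    then obtain z where "z \<in> Z" "w = std_map Y z" "z \<le> x" by auto
    then show "w \<in> {w \<in> std_map Y ` Z. w \<le> std_map Y x}" using assms std_le_iff[OF assms(1), of z x] by auto
  qed
  moreover have "inj_on (std_map Y) {z \<in> Z. z \<le> x}"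
    using std_inj[OF assms(1)] by (rule inj_on_subset) (use assms(2) in auto)
  ultimately show ?thesis unfolding std_map_def by (simp add: card_image)
qed

lemma std_comp_img:
  assumes "finite Y" "Z \<subseteq> Y" "A \<subseteq> Z"
  shows "std_map (std_map Y ` Z) ` std_map Y ` A = std_map Z ` A"
  using std_comp[OF assms(1,2)] assms(3) by (auto simp: image_iff) (metis subsetD)+

lemma std_id: "x \<in> {1..n} \<Longrightarrow> std_map {1..n} x = x"
proof -
  assume "x \<in> {1..n}"
  then have "{y \<in> {1..n}. y \<le> x} = {1..x}" by auto
  then show ?thesis unfolding std_map_def by simp
qed

lemma shift_sub: "Y' \<subseteq> {1..m} \<Longrightarrow> shift Y' n \<subseteq> {n+1..n+m}"
  unfolding shift_def by auto

lemma mem_shift: "x \<in> shift A n \<longleftrightarrow> (\<exists>y\<in>A. x = y + n)"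
  unfolding shift_def by auto

lemma std_shift1:
  assumes "Y \<subseteq> {1..n}" "Y' \<subseteq> {1..m}" "x \<in> Y"
  shows "std_map (Y \<union> shift Y' n) x = std_map Y x"
proof -
  have "x \<le> n" using assms by auto
  have "{y \<in> Y \<union> shift Y' n. y \<le> x} = {y \<in> Y. y \<le> x}"
  proof (rule set_eqI)
    fix y
    have "y \<in> shift Y' n \<Longrightarrow> y > n" using shift_sub[OF assms(2), of n] by auto
    then show "y \<in> {y \<in> Y \<union> shift Y' n. y \<le> x} \<longleftrightarrow> y \<in> {y \<in> Y. y \<le> x}"
      using \<open>x \<le> n\<close> by auto
  qed
  then show ?thesis unfolding std_map_def by simp
qed

lemma card_shift: "card (shift A n) = card A"
  unfolding shift_def by (rule card_image) (simp add: inj_on_def)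

lemma finite_shift[simp]: "finite (shift A n) \<longleftrightarrow> finite A"
  unfolding shift_def by (simp add: finite_image_iff inj_on_def)

lemma shift_Un: "shift (A \<union> B) n = shift A n \<union> shift B n"
  unfolding shift_def by auto
lemma shift_Int: "shift (A \<inter> B) n = shift A n \<inter> shift B n"
  unfolding shift_def by auto
lemma shift_Diff: "shift (A - B) n = shift A n - shift B n"
  unfolding shift_def by auto
lemma shift_empty[simp]: "shift {} n = {}"
  unfolding shift_def by auto
lemma shift_inj: "shift A n = shift B n \<longleftrightarrow> A = B"
  unfolding shift_def by (auto simp: inj_image_eq_iff inj_on_def)
lemma shift_shift: "shift (shift A m) n = shift A (m + n)"
  unfolding shift_def by (auto simp: image_image add.assoc)
lemma shift_0[simp]: "shift A 0 = A"
  unfolding shift_def by auto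
lemma shift_interval: "shift {1..m} n = {n+1..n+m}"
  unfolding shift_def by (auto simp: image_iff intro: bexI[of _ "x - n" for x])

lemma std_shift2:
  assumes "Y \<subseteq> {1..n}" "Y' \<subseteq> {1..m}" "y \<in> Y'"
  shows "std_map (Y \<union> shift Y' n) (y + n) = card Y + std_map Y' y"
proof -
  have fY: "finite Y" "finite Y'" using assms finite_subset by auto
  have "{w \<in> Y \<union> shift Y' n. w \<le> y + n} = Y \<union> shift {z \<in> Y'. z \<le> y} n"
  proof (rule set_eqI)
    fix w
    show "w \<in> {w \<in> Y \<union> shift Y' n. w \<le> y + n} \<longleftrightarrow> w \<in> Y \<union> shift {z \<in> Y'. z \<le> y} n"
      using assms by (auto simp: mem_shift)
  qed
  moreover have "card (Y \<union> shift {z \<in> Y'. z \<le> y} n) = card Y + card {z \<in> Y'. z \<le> y}"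
  proof -
    have "Y \<inter> shift {z \<in> Y'. z \<le> y} n = {}" using assms unfolding shift_def by fastforce
    then show ?thesis using fY by (simp add: card_Un_disjoint card_shift)
  qed
  ultimately show ?thesis unfolding std_map_def by simp
qed

lemma std_shift_img:
  assumes "Y \<subseteq> {1..n}" "Y' \<subseteq> {1..m}" "A \<subseteq> Y" "A' \<subseteq> Y'"
  shows "std_map (Y \<union> shift Y' n) ` (A \<union> shift A' n) = std_map Y ` A \<union> shift (std_map Y' ` A') (card Y)"
proof -
  have "std_map (Y \<union> shift Y' n) ` A = std_map Y ` A"
    using std_shift1[OF assms(1,2)] assms(3) by (intro image_cong) auto
  moreover have "std_map (Y \<union> shift Y' n) ` shift A' n = shift (std_map Y' ` A') (card Y)"
  proof -
    have "std_map (Y \<union> shift Y' n) ` shift A' n = (\<lambda>y. std_map (Y \<union> shift Y' n) (y + n)) ` A'"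
      unfolding shift_def by (simp add: image_image)
    also have "\<dots> = (\<lambda>y. card Y + std_map Y' y) ` A'"
      using std_shift2[OF assms(1,2)] assms(4) by (intro image_cong) auto
    also have "\<dots> = shift (std_map Y' ` A') (card Y)"
      unfolding shift_def by (simp add: image_image add.commute)
    finally show ?thesis .
  qed
  ultimately show ?thesis by (simp add: image_Un)
qed

lemma img_Int_inj:
  assumes "inj_on f Y"
  shows "f ` (U \<inter> Y) \<inter> f ` (V \<inter> Y) = f ` ((U \<inter> V) \<inter> Y)"
proof -
  have "f ` ((U \<inter> Y) \<inter> (V \<inter> Y)) = f ` (U \<inter> Y) \<inter> f ` (V \<inter> Y)"
    by (rule inj_on_image_Int[OF assms]) auto
  moreover have "(U \<inter> Y) \<inter> (V \<inter> Y) = (U \<inter> V) \<inter> Y" by auto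
  ultimately show ?thesis by simp
qed

lemma topo_std:
  assumes "Y \<subseteq> {1..deg t}"
  shows "is_topo (card Y) {std_map Y ` (U \<inter> Y) | U. U \<in> opens t}"
proof -
  have fY: "finite Y" using assms finite_subset by auto
  note inj = std_inj[OF fY] and rng = std_range[OF fY]
  show ?thesis unfolding is_topo_def
  proof (intro conjI ballI)
    show "{std_map Y ` (U \<inter> Y) |U. U \<in> opens t} \<subseteq> Pow {1..card Y}"
      using rng by auto
    show "{} \<in> {std_map Y ` (U \<inter> Y) |U. U \<in> opens t}" by (auto intro: exI[of _ "{}"])
    have "std_map Y ` ({1..deg t} \<inter> Y) = {1..card Y}" using assms rng by (simp add: Int_absorb1)
    then show "{1..card Y} \<in> {std_map Y ` (U \<inter> Y) |U. U \<in> opens t}"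
      using opens_full[of t] by blast
  next
    fix A B assume "A \<in> {std_map Y ` (U \<inter> Y) |U. U \<in> opens t}" "B \<in> {std_map Y ` (U \<inter> Y) |U. U \<in> opens t}"
    then obtain U V where UV: "U \<in> opens t" "V \<in> opens t" "A = std_map Y ` (U \<inter> Y)" "B = std_map Y ` (V \<inter> Y)" by auto
    have "A \<union> B = std_map Y ` ((U \<union> V) \<inter> Y)" using UV by auto
    then show "A \<union> B \<in> {std_map Y ` (U \<inter> Y) |U. U \<in> opens t}" using opens_Un[OF UV(1,2)] by blast
    have "A \<inter> B = std_map Y ` ((U \<inter> V) \<inter> Y)" using UV img_Int_inj[OF inj] by simp
    then show "A \<inter> B \<in> {std_map Y ` (U \<inter> Y) |U. U \<in> opens t}" using opens_Int[OF UV(1,2)] by blast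
  qed
qed

lemma deg_std: "Y \<subseteq> {1..deg t} \<Longrightarrow> deg (std_restr t Y) = card Y"
  and opens_std: "Y \<subseteq> {1..deg t} \<Longrightarrow> opens (std_restr t Y) = {std_map Y ` (U \<inter> Y) | U. U \<in> opens t}"
  using topo_Abs[OF topo_std] unfolding std_restr_def by auto

lemma std_full: "std_restr t {1..deg t} = t"
proof (rule ftop_eqI)
  show "deg (std_restr t {1..deg t}) = deg t" by (simp add: deg_std)
  have "\<And>U. U \<in> opens t \<Longrightarrow> std_map {1..deg t} ` (U \<inter> {1..deg t}) = U"
  proof -
    fix U assume "U \<in> opens t"
    then have "U \<inter> {1..deg t} = U" using opens_sub by auto
    moreover have "std_map {1..deg t} ` U = U" using \<open>U \<in> opens t\<close> opens_sub[of U t] std_id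
      by (subst image_cong[OF refl, of _ _ id]) auto
    ultimately show "std_map {1..deg t} ` (U \<inter> {1..deg t}) = U" by simp
  qed
  then show "opens (std_restr t {1..deg t}) = opens t" by (auto simp: opens_std)
qed

lemma std_emptyset: "std_restr t {} = top_one"
  by (rule ftop_eqI) (auto simp: deg_std opens_std intro: opens_empty)

lemma std_std:
  assumes "Y \<subseteq> {1..deg t}" "Z \<subseteq> Y"
  shows "std_restr (std_restr t Y) (std_map Y ` Z) = std_restr t Z"
proof -
  have fY: "finite Y" using assms finite_subset by auto
  note inj = std_inj[OF fY] and rng = std_range[OF fY]
  have sub: "std_map Y ` Z \<subseteq> {1..deg (std_restr t Y)}"
    using assms rng by (auto simp: deg_std)
  have Zs: "Z \<subseteq> {1..deg t}" using assms by auto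
  have eq: "\<And>U. std_map (std_map Y ` Z) ` (std_map Y ` (U \<inter> Y) \<inter> std_map Y ` Z) = std_map Z ` (U \<inter> Z)"
  proof -
    fix U
    have "std_map Y ` Z = std_map Y ` (Z \<inter> Y)" using assms by (simp add: Int_absorb2)
    then have "std_map Y ` (U \<inter> Y) \<inter> std_map Y ` Z = std_map Y ` ((U \<inter> Z) \<inter> Y)"
      using img_Int_inj[OF inj, of U Z] by simp
    also have "\<dots> = std_map Y ` (U \<inter> Z)" using assms by (metis Int_absorb2 Int_assoc)
    finally show "?thesis U" using std_comp_img[OF fY assms(2), of "U \<inter> Z"] by auto
  qed
  show ?thesis
  proof (rule ftop_eqI)
    show "deg (std_restr (std_restr t Y) (std_map Y ` Z)) = deg (std_restr t Z)"
      using sub Zs assms by (simp add: deg_std card_image inj_on_subset[OF inj])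
    have "opens (std_restr (std_restr t Y) (std_map Y ` Z)) =
          {std_map (std_map Y ` Z) ` (V \<inter> std_map Y ` Z) | V. V \<in> opens (std_restr t Y)}"
      using sub by (simp add: opens_std)
    also have "\<dots> = {std_map (std_map Y ` Z) ` (std_map Y ` (U \<inter> Y) \<inter> std_map Y ` Z) | U. U \<in> opens t}"
      using assms(1) by (auto simp: opens_std)
    also have "\<dots> = opens (std_restr t Z)"
      using Zs by (simp add: opens_std eq)
    finally show "opens (std_restr (std_restr t Y) (std_map Y ` Z)) = opens (std_restr t Z)" .
  qed
qed

lemma shift_gt: "V \<subseteq> {1..m} \<Longrightarrow> x \<in> shift V n \<Longrightarrow> n < x"
  by (auto simp: mem_shift)

lemma split_Int:
  assumes "U1 \<subseteq> {1..n}" "U2 \<subseteq> {1..n}" "V1 \<subseteq> {1..m}" "V2 \<subseteq> {1..m}"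
  shows "(U1 \<union> shift V1 n) \<inter> (U2 \<union> shift V2 n) = (U1 \<inter> U2) \<union> shift (V1 \<inter> V2) n"
proof -
  have "U1 \<inter> shift V2 n = {}" "U2 \<inter> shift V1 n = {}"
    using assms shift_gt[OF assms(3)] shift_gt[OF assms(4)] by fastforce+
  then show ?thesis by (auto simp: shift_Int)
qed

lemma split_eq:
  assumes "U1 \<subseteq> {1..n}" "U2 \<subseteq> {1..n}" "V1 \<subseteq> {1..m}" "V2 \<subseteq> {1..m}"
    "U1 \<union> shift V1 n = U2 \<union> shift V2 n"
  shows "U1 = U2 \<and> V1 = V2"
proof -
  have d1: "U1 \<inter> shift V1 n = {}" "U2 \<inter> shift V2 n = {}"
    using assms shift_gt[OF assms(3)] shift_gt[OF assms(4)] by fastforce+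
  have "(U1 \<union> shift V1 n) \<inter> {1..n} = U1" "(U2 \<union> shift V2 n) \<inter> {1..n} = U2"
    using assms shift_gt[OF assms(3)] shift_gt[OF assms(4)] by fastforce+
  then have "U1 = U2" using assms(5) by metis
  moreover have "shift V1 n = shift V2 n"
    using d1 assms(5) \<open>U1 = U2\<close> by blast
  ultimately show ?thesis by (simp add: shift_inj)
qed

lemma interval_split: "{1..n+m} = {1..n} \<union> shift {1..m} n"
  unfolding shift_interval by auto

lemma split_compl:
  assumes "U \<subseteq> {1..n}" "V \<subseteq> {1..m}"
  shows "{1..n+m} - (U \<union> shift V n) = ({1..n} - U) \<union> shift ({1..m} - V) n"
proof -
  have "{1..n} \<inter> shift {1..m} n = {}" using shift_gt[of "{1..m}" m] by fastforce
  then show ?thesis using assms shift_gt[of V m] unfolding interval_split shift_Diff by fastforce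
qed

definition dots where "dots a b = {U \<union> shift U' (deg a) | U U'. U \<in> opens a \<and> U' \<in> opens b}"

lemma shift_mono: "A \<subseteq> B \<Longrightarrow> shift A n \<subseteq> shift B n"
  unfolding shift_def by auto

lemma topo_dot: "is_topo (deg a + deg b) (dots a b)"
  unfolding is_topo_def
proof (intro conjI ballI)
  show "dots a b \<subseteq> Pow {1..deg a + deg b}"
  proof
    fix X assume "X \<in> dots a b"
    then obtain U V where "U \<in> opens a" "V \<in> opens b" "X = U \<union> shift V (deg a)"
      unfolding dots_def by blast
    then show "X \<in> Pow {1..deg a + deg b}"
      using opens_sub[of U a] shift_mono[OF opens_sub[of V b], of "deg a"] interval_split[of "deg a" "deg b"]
      by auto
  qed
  show "{} \<in> dots a b" unfolding dots_def
    using opens_empty[of a] opens_empty[of b] shift_empty by blast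
  show "{1..deg a + deg b} \<in> dots a b" unfolding dots_def
    using opens_full[of a] opens_full[of b] interval_split by blast
next
  fix A B assume "A \<in> dots a b" "B \<in> dots a b"
  then obtain U1 V1 U2 V2 where h: "U1 \<in> opens a" "V1 \<in> opens b" "U2 \<in> opens a" "V2 \<in> opens b"
    "A = U1 \<union> shift V1 (deg a)" "B = U2 \<union> shift V2 (deg a)" unfolding dots_def by blast
  have "A \<union> B = (U1 \<union> U2) \<union> shift (V1 \<union> V2) (deg a)" using h by (auto simp: shift_Un)
  then show "A \<union> B \<in> dots a b" unfolding dots_def
    using opens_Un[OF h(1,3)] opens_Un[OF h(2,4)] by blast
  have "A \<inter> B = (U1 \<inter> U2) \<union> shift (V1 \<inter> V2) (deg a)"
    unfolding h(5,6) by (rule split_Int) (use h opens_sub in auto)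
  then show "A \<inter> B \<in> dots a b" unfolding dots_def
    using opens_Int[OF h(1,3)] opens_Int[OF h(2,4)] by blast
qed

lemma deg_dot[simp]: "deg (top_dot a b) = deg a + deg b"
  and opens_dot: "opens (top_dot a b) = dots a b"
  using topo_Abs[OF topo_dot] unfolding top_dot_def dots_def by auto

lemma dot_one_left[simp]: "top_dot top_one a = a"
proof (rule ftop_eqI)
  have "dots top_one a = opens a" unfolding dots_def by auto
  then show "opens (top_dot top_one a) = opens a" by (simp add: opens_dot)
qed simp

lemma dot_one_right[simp]: "top_dot a top_one = a"
proof (rule ftop_eqI)
  have "dots a top_one = opens a" unfolding dots_def by auto
  then show "opens (top_dot a top_one) = opens a" by (simp add: opens_dot)
qed simp

lemma dot_assoc: "top_dot (top_dot a b) c = top_dot a (top_dot b c)"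
proof (rule ftop_eqI)
  let ?P = "{U \<union> shift V (deg a) \<union> shift W (deg a + deg b) | U V W. U \<in> opens a \<and> V \<in> opens b \<and> W \<in> opens c}"
  have "dots (top_dot a b) c = ?P"
    unfolding dots_def by (auto simp: opens_dot dots_def)
  moreover have "dots a (top_dot b c) = ?P"
  proof -
    have e: "\<And>U V W. U \<union> shift (V \<union> shift W (deg b)) (deg a) = U \<union> shift V (deg a) \<union> shift W (deg a + deg b)"
      by (simp add: shift_Un shift_shift Un_assoc add.commute)
    show ?thesis
    proof (rule set_eqI, rule iffI)
      fix X assume "X \<in> dots a (top_dot b c)"
      then obtain U Y where h: "U \<in> opens a" "Y \<in> dots b c" "X = U \<union> shift Y (deg a)"
        by (auto simp: dots_def opens_dot)
      then obtain V W where "V \<in> opens b" "W \<in> opens c" "Y = V \<union> shift W (deg b)"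
        by (auto simp: dots_def)
      then have "X = U \<union> shift V (deg a) \<union> shift W (deg a + deg b)" using h e by simp
      then show "X \<in> ?P" using h \<open>V \<in> opens b\<close> \<open>W \<in> opens c\<close> by blast
    next
      fix X assume "X \<in> ?P"
      then obtain U V W where h: "U \<in> opens a" "V \<in> opens b" "W \<in> opens c"
        "X = U \<union> shift V (deg a) \<union> shift W (deg a + deg b)" by blast
      have "V \<union> shift W (deg b) \<in> opens (top_dot b c)" unfolding opens_dot dots_def using h by blast
      moreover have "X = U \<union> shift (V \<union> shift W (deg b)) (deg a)" using h e by simp
      ultimately show "X \<in> dots a (top_dot b c)" unfolding dots_def using h by blast
    qed
  qed
  ultimately show "opens (top_dot (top_dot a b) c) = opens (top_dot a (top_dot b c))"
    by (simp add: opens_dot)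
qed simp

definition downs where "downs a b = {U \<union> shift {1..deg b} (deg a) | U. U \<in> opens a} \<union> {shift U' (deg a) | U'. U' \<in> opens b}"

lemma mem_downs: "X \<in> downs a b \<longleftrightarrow> (\<exists>U\<in>opens a. X = U \<union> shift {1..deg b} (deg a)) \<or> (\<exists>V\<in>opens b. X = shift V (deg a))"
  unfolding downs_def by blast

lemma downs_closed:
  assumes A: "A \<in> downs a b" and B: "B \<in> downs a b"
  shows "A \<union> B \<in> downs a b \<and> A \<inter> B \<in> downs a b"
proof -
  let ?S = "shift {1..deg b} (deg a)"
  have subS: "\<And>V. V \<in> opens b \<Longrightarrow> shift V (deg a) \<subseteq> ?S"
    using opens_sub by (intro shift_mono) auto
  have disj: "\<And>U V. U \<in> opens a \<Longrightarrow> V \<in> opens b \<Longrightarrow> U \<inter> shift V (deg a) = {}"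
  proof -
    fix U V assume "U \<in> opens a" "V \<in> opens b"
    then show "U \<inter> shift V (deg a) = {}" using opens_sub[of U a] shift_gt[OF opens_sub[of V b]] by fastforce
  qed
  have c1: "\<And>U1 U2. U1 \<in> opens a \<Longrightarrow> U2 \<in> opens a \<Longrightarrow> (U1 \<union> ?S) \<union> (U2 \<union> ?S) \<in> downs a b \<and> (U1 \<union> ?S) \<inter> (U2 \<union> ?S) \<in> downs a b"
  proof -
    fix U1 U2 assume h: "U1 \<in> opens a" "U2 \<in> opens a"
    have "(U1 \<union> ?S) \<union> (U2 \<union> ?S) = (U1 \<union> U2) \<union> ?S" "(U1 \<union> ?S) \<inter> (U2 \<union> ?S) = (U1 \<inter> U2) \<union> ?S" by auto
    then show "?thesis U1 U2" unfolding mem_downs using opens_Un[OF h] opens_Int[OF h] by metis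
  qed
  have c2: "\<And>U V. U \<in> opens a \<Longrightarrow> V \<in> opens b \<Longrightarrow> (U \<union> ?S) \<union> shift V (deg a) \<in> downs a b \<and> (U \<union> ?S) \<inter> shift V (deg a) \<in> downs a b"
  proof -
    fix U V assume h: "U \<in> opens a" "V \<in> opens b"
    have "(U \<union> ?S) \<union> shift V (deg a) = U \<union> ?S" using subS[OF h(2)] by auto
    moreover have "(U \<union> ?S) \<inter> shift V (deg a) = shift V (deg a)" using subS[OF h(2)] disj[OF h] by auto
    ultimately show "?thesis U V" unfolding mem_downs using h by metis
  qed
  have c3: "\<And>V1 V2. V1 \<in> opens b \<Longrightarrow> V2 \<in> opens b \<Longrightarrow> shift V1 (deg a) \<union> shift V2 (deg a) \<in> downs a b \<and> shift V1 (deg a) \<inter> shift V2 (deg a) \<in> downs a b"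
  proof -
    fix V1 V2 assume h: "V1 \<in> opens b" "V2 \<in> opens b"
    show "?thesis V1 V2" unfolding mem_downs shift_Un[symmetric] shift_Int[symmetric]
      using opens_Un[OF h] opens_Int[OF h] by metis
  qed
  from A consider (l) U where "U \<in> opens a" "A = U \<union> ?S" | (r) V where "V \<in> opens b" "A = shift V (deg a)"
    unfolding mem_downs by metis
  then show ?thesis
  proof cases
    case l
    from B consider (l') U' where "U' \<in> opens a" "B = U' \<union> ?S" | (r') V' where "V' \<in> opens b" "B = shift V' (deg a)"
      unfolding mem_downs by metis
    then show ?thesis
    proof cases
      case l' then show ?thesis using c1[OF l(1) l'(1)] l(2) l'(2) by simp
    next
      case r' then show ?thesis using c2[OF l(1) r'(1)] l(2) r'(2) by simp
    qed
  next
    case r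
    from B consider (l') U' where "U' \<in> opens a" "B = U' \<union> ?S" | (r') V' where "V' \<in> opens b" "B = shift V' (deg a)"
      unfolding mem_downs by metis
    then show ?thesis
    proof cases
      case l' then show ?thesis using c2[OF l'(1) r(1)] r(2) l'(2) by (simp add: Un_commute Int_commute)
    next
      case r' then show ?thesis using c3[OF r(1) r'(1)] r(2) r'(2) by simp
    qed
  qed
qed

lemma topo_down: "is_topo (deg a + deg b) (downs a b)"
  unfolding is_topo_def
proof (intro conjI ballI)
  show "downs a b \<subseteq> Pow {1..deg a + deg b}"
  proof
    fix X assume "X \<in> downs a b"
    then consider (l) U where "U \<in> opens a" "X = U \<union> shift {1..deg b} (deg a)"
      | (r) V where "V \<in> opens b" "X = shift V (deg a)" unfolding mem_downs by metis
    then show "X \<in> Pow {1..deg a + deg b}"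
    proof cases
      case l
      then have "X \<subseteq> {1..deg a} \<union> shift {1..deg b} (deg a)" using opens_sub[of U a] by blast
      then show ?thesis by (simp only: Pow_iff interval_split)
    next
      case r
      then have "X \<subseteq> {1..deg a} \<union> shift {1..deg b} (deg a)" using shift_mono[OF opens_sub[of V b], of "deg a"] by blast
      then show ?thesis by (simp only: Pow_iff interval_split)
    qed
  qed
  have "{} = shift {} (deg a)" by simp
  then show "{} \<in> downs a b" unfolding mem_downs using opens_empty[of b] by blast
  show "{1..deg a + deg b} \<in> downs a b"
    unfolding mem_downs using opens_full[of a] interval_split[of "deg a" "deg b"] by blast
next
  fix A B assume "A \<in> downs a b" "B \<in> downs a b"
  then show "A \<union> B \<in> downs a b" "A \<inter> B \<in> downs a b" using downs_closed[of A a b B] by simp_all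
qed

lemma deg_down[simp]: "deg (top_down a b) = deg a + deg b"
  and opens_down: "opens (top_down a b) = downs a b"
  using topo_Abs[OF topo_down] unfolding top_down_def downs_def by auto

lemma down_one_left[simp]: "top_down top_one a = a"
proof (rule ftop_eqI)
  have "downs top_one a = opens a" unfolding downs_def using opens_full[of a] by auto
  then show "opens (top_down top_one a) = opens a" by (simp add: opens_down)
qed simp

lemma down_one_right[simp]: "top_down a top_one = a"
proof (rule ftop_eqI)
  have "downs a top_one = opens a" unfolding downs_def using opens_empty[of a] by auto
  then show "opens (top_down a top_one) = opens a" by (simp add: opens_down)
qed simp

lemma down_assoc: "top_down (top_down a b) c = top_down a (top_down b c)"
proof (rule ftop_eqI)
  let ?n = "deg a" and ?m = "deg b" and ?p = "deg c"
  let ?Sb = "shift {1..?m} ?n" and ?Sc = "shift {1..?p} (?n + ?m)"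
  have e1: "shift {1..?m + ?p} ?n = ?Sb \<union> ?Sc"
    unfolding interval_split[of "deg b" "deg c"] shift_Un shift_shift by (simp add: add.commute)
  have e2: "\<And>V. shift (V \<union> shift {1..?p} ?m) ?n = shift V ?n \<union> ?Sc"
    by (simp add: shift_Un shift_shift add.commute)
  have e3: "\<And>W. shift (shift W ?m) ?n = shift W (?n + ?m)"
    by (simp add: shift_shift add.commute)
  let ?P = "\<lambda>X. (\<exists>U\<in>opens a. X = U \<union> ?Sb \<union> ?Sc) \<or> (\<exists>V\<in>opens b. X = shift V ?n \<union> ?Sc) \<or> (\<exists>W\<in>opens c. X = shift W (?n + ?m))"
  have l: "X \<in> downs (top_down a b) c \<longleftrightarrow> ?P X" for X
  proof
    assume "X \<in> downs (top_down a b) c"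
    then consider (i) Y where "Y \<in> downs a b" "X = Y \<union> ?Sc" | (ii) W where "W \<in> opens c" "X = shift W (?n + ?m)"
      unfolding mem_downs[of X] opens_down deg_down by metis
    then show "?P X"
    proof cases
      case i
      from i(1) consider (a) U where "U \<in> opens a" "Y = U \<union> ?Sb" | (b) V where "V \<in> opens b" "Y = shift V ?n"
        unfolding mem_downs by metis
      then show ?thesis using i(2) by cases auto
    qed auto
  next
    assume "?P X"
    then consider (a) U where "U \<in> opens a" "X = U \<union> ?Sb \<union> ?Sc" | (b) V where "V \<in> opens b" "X = shift V ?n \<union> ?Sc"
      | (c) W where "W \<in> opens c" "X = shift W (?n + ?m)" by metis
    then show "X \<in> downs (top_down a b) c"
    proof cases
      case a
      then have "U \<union> ?Sb \<in> downs a b" unfolding mem_downs by blast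
      then show ?thesis using a(2) unfolding mem_downs[of X] opens_down deg_down by blast
    next
      case b
      then have "shift V ?n \<in> downs a b" unfolding mem_downs by blast
      then show ?thesis using b(2) unfolding mem_downs[of X] opens_down deg_down by blast
    next
      case c
      then show ?thesis unfolding mem_downs[of X] opens_down deg_down by blast
    qed
  qed
  have r: "X \<in> downs a (top_down b c) \<longleftrightarrow> ?P X" for X
  proof
    assume "X \<in> downs a (top_down b c)"
    then consider (i) U where "U \<in> opens a" "X = U \<union> shift {1..?m + ?p} ?n" | (ii) Y where "Y \<in> downs b c" "X = shift Y ?n"
      unfolding mem_downs[of X] opens_down deg_down by metis
    then show "?P X"
    proof cases
      case i then show ?thesis unfolding e1 Un_assoc by blast
    next
      case ii
      from ii(1) consider (a) V where "V \<in> opens b" "Y = V \<union> shift {1..?p} ?m" | (b) W where "W \<in> opens c" "Y = shift W ?m"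
        unfolding mem_downs by metis
      then show ?thesis
      proof cases
        case a then show ?thesis using ii(2) e2[of V] by blast
      next
        case b then show ?thesis using ii(2) e3[of W] by blast
      qed
    qed
  next
    assume "?P X"
    then consider (a) U where "U \<in> opens a" "X = U \<union> ?Sb \<union> ?Sc" | (b) V where "V \<in> opens b" "X = shift V ?n \<union> ?Sc"
      | (c) W where "W \<in> opens c" "X = shift W (?n + ?m)" by metis
    then show "X \<in> downs a (top_down b c)"
    proof cases
      case a
      then have "X = U \<union> shift {1..?m + ?p} ?n" unfolding e1 by auto
      then show ?thesis using a(1) unfolding mem_downs[of X] opens_down deg_down by blast
    next
      case b
      then have "V \<union> shift {1..?p} ?m \<in> downs b c" unfolding mem_downs by blast
      moreover have "X = shift (V \<union> shift {1..?p} ?m) ?n" using b(2) e2[of V] by simp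
      ultimately show ?thesis unfolding mem_downs[of X] opens_down deg_down by blast
    next
      case c
      then have "shift W ?m \<in> downs b c" unfolding mem_downs by blast
      moreover have "X = shift (shift W ?m) ?n" using c(2) e3[of W] by simp
      ultimately show ?thesis unfolding mem_downs[of X] opens_down deg_down by blast
    qed
  qed
  show "opens (top_down (top_down a b) c) = opens (top_down a (top_down b c))"
    unfolding opens_down by (rule set_eqI) (simp only: l r)
qed simp

lemma std_split:
  assumes "Y \<subseteq> {1..n}" "Y' \<subseteq> {1..m}" "U \<subseteq> {1..n}" "V \<subseteq> {1..m}"
  shows "std_map (Y \<union> shift Y' n) ` ((U \<union> shift V n) \<inter> (Y \<union> shift Y' n)) =
         std_map Y ` (U \<inter> Y) \<union> shift (std_map Y' ` (V \<inter> Y')) (card Y)"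
proof -
  have "(U \<union> shift V n) \<inter> (Y \<union> shift Y' n) = (U \<inter> Y) \<union> shift (V \<inter> Y') n"
    by (rule split_Int) (use assms in auto)
  then show ?thesis using std_shift_img[OF assms(1,2), of "U \<inter> Y" "V \<inter> Y'"] by auto
qed

lemma card_split:
  assumes "Y \<subseteq> {1..n}" "Y' \<subseteq> {1..m}"
  shows "card (Y \<union> shift Y' n) = card Y + card Y'"
proof -
  have "Y \<inter> shift Y' n = {}" using assms shift_gt[OF assms(2)] by fastforce
  moreover have "finite Y" "finite Y'" using assms finite_subset by auto
  ultimately show ?thesis by (simp add: card_Un_disjoint card_shift)
qed

lemma split_sub:
  assumes "Y \<subseteq> {1..n}" "Y' \<subseteq> {1..m}"
  shows "Y \<union> shift Y' n \<subseteq> {1..n+m}"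
  using assms shift_mono[OF assms(2), of n] interval_split[of n m] by auto

lemma std_dot:
  assumes "Y \<subseteq> {1..deg a}" "Y' \<subseteq> {1..deg b}"
  shows "std_restr (top_dot a b) (Y \<union> shift Y' (deg a)) = top_dot (std_restr a Y) (std_restr b Y')"
proof (rule ftop_eqI)
  have sub: "Y \<union> shift Y' (deg a) \<subseteq> {1..deg (top_dot a b)}" using split_sub[OF assms] by simp
  show "deg (std_restr (top_dot a b) (Y \<union> shift Y' (deg a))) = deg (top_dot (std_restr a Y) (std_restr b Y'))"
    using sub assms by (simp add: deg_std card_split[OF assms])
  let ?W = "Y \<union> shift Y' (deg a)"
  have "opens (std_restr (top_dot a b) ?W) = {std_map ?W ` (X \<inter> ?W) | X. X \<in> dots a b}"
    using sub by (simp add: opens_std opens_dot)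
  also have "\<dots> = {std_map Y ` (U \<inter> Y) \<union> shift (std_map Y' ` (V \<inter> Y')) (card Y) | U V. U \<in> opens a \<and> V \<in> opens b}"
  proof -
    have "\<And>U V. U \<in> opens a \<Longrightarrow> V \<in> opens b \<Longrightarrow> std_map ?W ` ((U \<union> shift V (deg a)) \<inter> ?W) =
       std_map Y ` (U \<inter> Y) \<union> shift (std_map Y' ` (V \<inter> Y')) (card Y)"
      by (rule std_split[OF assms]) (metis opens_sub subset_refl empty_subsetI)+
    then show ?thesis unfolding dots_def by blast
  qed
  also have "\<dots> = opens (top_dot (std_restr a Y) (std_restr b Y'))"
    unfolding opens_dot dots_def using assms by (auto simp: opens_std deg_std)
  finally show "opens (std_restr (top_dot a b) ?W) = opens (top_dot (std_restr a Y) (std_restr b Y'))" .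
qed

lemma std_down:
  assumes "Y \<subseteq> {1..deg a}" "Y' \<subseteq> {1..deg b}"
  shows "std_restr (top_down a b) (Y \<union> shift Y' (deg a)) = top_down (std_restr a Y) (std_restr b Y')"
proof (rule ftop_eqI)
  have sub: "Y \<union> shift Y' (deg a) \<subseteq> {1..deg (top_down a b)}" using split_sub[OF assms] by simp
  show "deg (std_restr (top_down a b) (Y \<union> shift Y' (deg a))) = deg (top_down (std_restr a Y) (std_restr b Y'))"
    using sub assms by (simp add: deg_std card_split[OF assms])
  let ?W = "Y \<union> shift Y' (deg a)"
  have fY': "finite Y'" using assms(2) finite_subset by auto
  have i1: "\<And>U. U \<in> opens a \<Longrightarrow> std_map ?W ` ((U \<union> shift {1..deg b} (deg a)) \<inter> ?W) =
       std_map Y ` (U \<inter> Y) \<union> shift {1..card Y'} (card Y)"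
  proof -
    fix U assume "U \<in> opens a"
    then have "std_map ?W ` ((U \<union> shift {1..deg b} (deg a)) \<inter> ?W) =
       std_map Y ` (U \<inter> Y) \<union> shift (std_map Y' ` ({1..deg b} \<inter> Y')) (card Y)"
      by (intro std_split[OF assms]) (metis opens_sub subset_refl empty_subsetI)+
    moreover have "std_map Y' ` ({1..deg b} \<inter> Y') = {1..card Y'}"
      using assms std_range[OF fY'] by (simp add: Int_absorb1)
    ultimately show "?thesis U" by simp
  qed
  have i2: "\<And>V. V \<in> opens b \<Longrightarrow> std_map ?W ` (shift V (deg a) \<inter> ?W) =
       shift (std_map Y' ` (V \<inter> Y')) (card Y)"
  proof -
    fix V assume "V \<in> opens b"
    then have "std_map ?W ` (({} \<union> shift V (deg a)) \<inter> ?W) =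
       std_map Y ` ({} \<inter> Y) \<union> shift (std_map Y' ` (V \<inter> Y')) (card Y)"
      by (intro std_split[OF assms]) (metis opens_sub subset_refl empty_subsetI)+
    then show "?thesis V" by simp
  qed
  have dimg: "\<And>a b. downs a b = (\<lambda>U. U \<union> shift {1..deg b} (deg a)) ` opens a \<union> (\<lambda>V. shift V (deg a)) ` opens b"
    unfolding downs_def by (simp add: Setcompr_eq_image)
  have simg: "\<And>t Y. Y \<subseteq> {1..deg t} \<Longrightarrow> opens (std_restr t Y) = (\<lambda>U. std_map Y ` (U \<inter> Y)) ` opens t"
    by (simp add: opens_std Setcompr_eq_image)
  have "opens (std_restr (top_down a b) ?W) = (\<lambda>X. std_map ?W ` (X \<inter> ?W)) ` downs a b"
    using sub by (simp add: simg opens_down)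
  also have "\<dots> = (\<lambda>U. std_map Y ` (U \<inter> Y) \<union> shift {1..card Y'} (card Y)) ` opens a \<union>
       (\<lambda>V. shift (std_map Y' ` (V \<inter> Y')) (card Y)) ` opens b"
    unfolding dimg[of a b] image_Un image_image using i1 i2 by (simp cong: image_cong)
  also have "\<dots> = opens (top_down (std_restr a Y) (std_restr b Y'))"
    unfolding opens_down dimg using assms by (simp add: simg deg_std image_image)
  finally show "opens (std_restr (top_down a b) ?W) = opens (top_down (std_restr a Y) (std_restr b Y'))" .
qed

lemma topo_iota: "is_topo (deg t) {{1..deg t} - U | U. U \<in> opens t}"
  unfolding is_topo_def Setcompr_eq_image
proof (intro conjI ballI)
  show "(\<lambda>U. {1..deg t} - U) ` opens t \<subseteq> Pow {1..deg t}" by auto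
  have "{} = {1..deg t} - {1..deg t}" by simp
  then show "{} \<in> (\<lambda>U. {1..deg t} - U) ` opens t" using opens_full[of t] by (rule image_eqI)
  have "{1..deg t} = {1..deg t} - {}" by simp
  then show "{1..deg t} \<in> (\<lambda>U. {1..deg t} - U) ` opens t" using opens_empty[of t] by (rule image_eqI)
next
  fix A B assume "A \<in> (\<lambda>U. {1..deg t} - U) ` opens t" "B \<in> (\<lambda>U. {1..deg t} - U) ` opens t"
  then obtain U V where h: "U \<in> opens t" "V \<in> opens t" "A = {1..deg t} - U" "B = {1..deg t} - V" by blast
  have "A \<union> B = {1..deg t} - (U \<inter> V)" "A \<inter> B = {1..deg t} - (U \<union> V)" using h by auto
  then show "A \<union> B \<in> (\<lambda>U. {1..deg t} - U) ` opens t" "A \<inter> B \<in> (\<lambda>U. {1..deg t} - U) ` opens t"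
    using opens_Int[OF h(1,2)] opens_Un[OF h(1,2)] by (auto intro: image_eqI)
qed

lemma deg_iota[simp]: "deg (top_iota t) = deg t"
  and opens_iota: "opens (top_iota t) = (\<lambda>U. {1..deg t} - U) ` opens t"
  using topo_Abs[OF topo_iota] unfolding top_iota_def by (auto simp: Setcompr_eq_image)

lemma iota_iota[simp]: "top_iota (top_iota t) = t"
proof (rule ftop_eqI)
  have e: "\<And>U. U \<in> opens t \<Longrightarrow> {1..deg t} - ({1..deg t} - U) = U" using opens_sub by auto
  show "opens (top_iota (top_iota t)) = opens t"
  proof -
    have "(\<lambda>U. {1..deg t} - ({1..deg t} - U)) ` opens t = (\<lambda>U. U) ` opens t"
      by (rule image_cong[OF refl e])
    then show ?thesis unfolding opens_iota deg_iota image_image by simp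
  qed
qed simp

lemma iota_one[simp]: "top_iota top_one = top_one"
  by (rule ftop_eqI) (auto simp: opens_iota)

lemma dots_img: "dots a b = (\<lambda>(U, V). U \<union> shift V (deg a)) ` (opens a \<times> opens b)"
  unfolding dots_def by auto

lemma iota_dot: "top_iota (top_dot a b) = top_dot (top_iota a) (top_iota b)"
proof (rule ftop_eqI)
  have e: "\<And>U V. U \<in> opens a \<Longrightarrow> V \<in> opens b \<Longrightarrow>
     {1..deg a + deg b} - (U \<union> shift V (deg a)) = ({1..deg a} - U) \<union> shift ({1..deg b} - V) (deg a)"
    by (rule split_compl) (metis opens_sub)+
  have "opens (top_iota (top_dot a b)) = (\<lambda>(U, V). ({1..deg a} - U) \<union> shift ({1..deg b} - V) (deg a)) ` (opens a \<times> opens b)"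
    unfolding opens_iota opens_dot dots_img deg_dot image_image using e by (auto intro!: image_cong)
  also have "\<dots> = opens (top_dot (top_iota a) (top_iota b))"
    unfolding opens_dot dots_img opens_iota deg_iota by (auto simp: image_iff)
  finally show "opens (top_iota (top_dot a b)) = opens (top_dot (top_iota a) (top_iota b))" .
qed simp

lemma std_iota:
  assumes "Y \<subseteq> {1..deg t}"
  shows "std_restr (top_iota t) Y = top_iota (std_restr t Y)"
proof (rule ftop_eqI)
  show "deg (std_restr (top_iota t) Y) = deg (top_iota (std_restr t Y))" using assms by (simp add: deg_std)
  have fY: "finite Y" using assms finite_subset by auto
  note inj = std_inj[OF fY] and rng = std_range[OF fY]
  have e: "\<And>U. std_map Y ` (({1..deg t} - U) \<inter> Y) = {1..card Y} - std_map Y ` (U \<inter> Y)"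
  proof -
    fix U
    have "({1..deg t} - U) \<inter> Y = Y - (U \<inter> Y)" using assms by auto
    then have "std_map Y ` (({1..deg t} - U) \<inter> Y) = std_map Y ` Y - std_map Y ` (U \<inter> Y)"
      using inj_on_image_set_diff[OF inj, of Y "U \<inter> Y"] by auto
    then show "?thesis U" using rng by simp
  qed
  have simg: "\<And>t Y. Y \<subseteq> {1..deg t} \<Longrightarrow> opens (std_restr t Y) = (\<lambda>U. std_map Y ` (U \<inter> Y)) ` opens t"
    by (simp add: opens_std Setcompr_eq_image)
  show "opens (std_restr (top_iota t) Y) = opens (top_iota (std_restr t Y))"
  proof -
    have "opens (std_restr (top_iota t) Y) = (\<lambda>U. std_map Y ` (({1..deg t} - U) \<inter> Y)) ` opens t"
      using assms by (simp add: simg opens_iota image_image)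
    also have "\<dots> = (\<lambda>U. {1..card Y} - std_map Y ` (U \<inter> Y)) ` opens t"
      by (rule image_cong[OF refl e])
    also have "\<dots> = opens (top_iota (std_restr t Y))"
      using assms by (simp add: simg opens_iota image_image deg_std)
    finally show ?thesis .
  qed
qed

abbreviation "AA t U \<equiv> std_restr t ({1..deg t} - U)"
abbreviation "BB t U \<equiv> std_restr t U"

definition tri :: "ftop \<Rightarrow> (ftop \<Rightarrow> ftop \<Rightarrow> ftop \<Rightarrow> 'm::comm_monoid_add) \<Rightarrow> 'm" where
  "tri t F = (\<Sum>O1\<in>opens t. \<Sum>O2\<in>{Q \<in> opens t. O1 \<subseteq> Q}.
      F (std_restr t ({1..deg t} - O2)) (std_restr t (O2 - O1)) (std_restr t O1))"

lemma img_diff: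
  assumes "finite Y" "A \<subseteq> Y"
  shows "{1..card Y} - std_map Y ` A = std_map Y ` (Y - A)"
proof -
  have "std_map Y ` (Y - A) = std_map Y ` Y - std_map Y ` A"
    by (rule inj_on_image_set_diff[OF std_inj[OF assms(1)]]) (use assms in auto)
  then show ?thesis using std_range[OF assms(1)] by simp
qed

lemma tri_left:
  "(\<Sum>U\<in>opens t. \<Sum>V\<in>opens (AA t U).
      F (std_restr (AA t U) ({1..deg (AA t U)} - V)) (std_restr (AA t U) V) (BB t U)) = tri t F"
proof -
  let ?n = "deg t"
  have inner: "(\<Sum>V\<in>opens (AA t U). F (std_restr (AA t U) ({1..deg (AA t U)} - V)) (std_restr (AA t U) V) (BB t U))
     = (\<Sum>Q\<in>{Q \<in> opens t. U \<subseteq> Q}. F (std_restr t ({1..?n} - Q)) (std_restr t (Q - U)) (std_restr t U))"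
    if U: "U \<in> opens t" for U
  proof -
    let ?Y = "{1..?n} - U"
    have Ys: "?Y \<subseteq> {1..?n}" by auto
    have fY: "finite ?Y" by simp
    note inj = std_inj[OF fY]
    let ?h = "\<lambda>Q. std_map ?Y ` (Q \<inter> ?Y)"
    have bij: "bij_betw ?h {Q \<in> opens t. U \<subseteq> Q} (opens (AA t U))"
    proof (rule bij_betw_imageI)
      show "inj_on ?h {Q \<in> opens t. U \<subseteq> Q}"
      proof (rule inj_onI)
        fix O1 O2 assume h1: "O1 \<in> {Q \<in> opens t. U \<subseteq> Q}" and h2: "O2 \<in> {Q \<in> opens t. U \<subseteq> Q}"
          and eq: "?h O1 = ?h O2"
        have "O1 \<inter> ?Y = O2 \<inter> ?Y" using eq inj_on_image_eq_iff[OF inj, of "O1 \<inter> ?Y" "O2 \<inter> ?Y"] by auto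
        moreover have "O1 = U \<union> (O1 \<inter> ?Y)" "O2 = U \<union> (O2 \<inter> ?Y)"
          using h1 h2 opens_sub[of O1 t] opens_sub[of O2 t] by auto
        ultimately show "O1 = O2" by metis
      qed
      show "?h ` {Q \<in> opens t. U \<subseteq> Q} = opens (AA t U)"
      proof (rule set_eqI, rule iffI)
        fix V assume "V \<in> ?h ` {Q \<in> opens t. U \<subseteq> Q}"
        then show "V \<in> opens (AA t U)" using Ys by (auto simp: opens_std)
      next
        fix V assume "V \<in> opens (AA t U)"
        then obtain Q where Q: "Q \<in> opens t" "V = ?h Q" using Ys by (auto simp: opens_std)
        have "(Q \<union> U) \<inter> ?Y = Q \<inter> ?Y" by auto
        then have "V = ?h (Q \<union> U)" using Q by simp
        moreover have "Q \<union> U \<in> {Q \<in> opens t. U \<subseteq> Q}" using Q opens_Un[OF Q(1) U] by auto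
        ultimately show "V \<in> ?h ` {Q \<in> opens t. U \<subseteq> Q}" by blast
      qed
    qed
    have vals: "F (std_restr (AA t U) ({1..deg (AA t U)} - ?h Q)) (std_restr (AA t U) (?h Q)) (BB t U)
       = F (std_restr t ({1..?n} - Q)) (std_restr t (Q - U)) (std_restr t U)"
      if Q: "Q \<in> {Q \<in> opens t. U \<subseteq> Q}" for Q
    proof -
      have "{1..deg (AA t U)} - ?h Q = std_map ?Y ` (?Y - Q \<inter> ?Y)"
        using img_diff[OF fY, of "Q \<inter> ?Y"] Ys by (simp add: deg_std)
      moreover have "?Y - Q \<inter> ?Y = {1..?n} - Q" using Q by auto
      moreover have "Q \<inter> ?Y = Q - U" using Q opens_sub[of Q t] by auto
      moreover have s1: "{1..?n} - Q \<subseteq> ?Y" using Q by auto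
      moreover have s2: "Q - U \<subseteq> ?Y" using Q opens_sub[of Q t] by auto
      ultimately show ?thesis using std_std[OF Ys s1] std_std[OF Ys s2] by simp
    qed
    have "(\<Sum>V\<in>opens (AA t U). F (std_restr (AA t U) ({1..deg (AA t U)} - V)) (std_restr (AA t U) V) (BB t U))
      = (\<Sum>Q\<in>{Q \<in> opens t. U \<subseteq> Q}. F (std_restr (AA t U) ({1..deg (AA t U)} - ?h Q)) (std_restr (AA t U) (?h Q)) (BB t U))"
      by (rule sum.reindex_bij_betw[OF bij, symmetric])
    also have "\<dots> = (\<Sum>Q\<in>{Q \<in> opens t. U \<subseteq> Q}. F (std_restr t ({1..?n} - Q)) (std_restr t (Q - U)) (std_restr t U))"
      by (rule sum.cong[OF refl vals])
    finally show ?thesis .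
  qed
  have "(\<Sum>U\<in>opens t. \<Sum>V\<in>opens (AA t U).
      F (std_restr (AA t U) ({1..deg (AA t U)} - V)) (std_restr (AA t U) V) (BB t U)) =
      (\<Sum>U\<in>opens t. \<Sum>Q\<in>{Q \<in> opens t. U \<subseteq> Q}. F (std_restr t ({1..?n} - Q)) (std_restr t (Q - U)) (std_restr t U))"
    using inner by (rule sum.cong[OF refl])
  then show ?thesis unfolding tri_def by simp
qed

lemma tri_right:
  "(\<Sum>U\<in>opens t. \<Sum>W\<in>opens (BB t U).
      F (AA t U) (std_restr (BB t U) ({1..deg (BB t U)} - W)) (std_restr (BB t U) W)) = tri t F"
proof -
  let ?n = "deg t"
  have inner: "(\<Sum>W\<in>opens (BB t U). F (AA t U) (std_restr (BB t U) ({1..deg (BB t U)} - W)) (std_restr (BB t U) W))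
     = (\<Sum>Q\<in>{Q \<in> opens t. Q \<subseteq> U}. F (std_restr t ({1..?n} - U)) (std_restr t (U - Q)) (std_restr t Q))"
    if U: "U \<in> opens t" for U
  proof -
    have Us: "U \<subseteq> {1..?n}" using opens_sub[OF U] .
    have fU: "finite U" using Us finite_subset by auto
    note inj = std_inj[OF fU]
    let ?h = "\<lambda>Q. std_map U ` Q"
    have bij: "bij_betw ?h {Q \<in> opens t. Q \<subseteq> U} (opens (BB t U))"
    proof (rule bij_betw_imageI)
      show "inj_on ?h {Q \<in> opens t. Q \<subseteq> U}"
      proof (rule inj_onI)
        fix O1 O2 assume h1: "O1 \<in> {Q \<in> opens t. Q \<subseteq> U}" and h2: "O2 \<in> {Q \<in> opens t. Q \<subseteq> U}"
          and eq: "?h O1 = ?h O2"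
        then show "O1 = O2" using inj_on_image_eq_iff[OF inj, of O1 O2] by auto
      qed
      show "?h ` {Q \<in> opens t. Q \<subseteq> U} = opens (BB t U)"
      proof (rule set_eqI, rule iffI)
        fix V assume "V \<in> ?h ` {Q \<in> opens t. Q \<subseteq> U}"
        then obtain Q where "Q \<in> opens t" "Q \<subseteq> U" "V = ?h Q" by auto
        then have "V = std_map U ` (Q \<inter> U)" by (simp add: Int_absorb2)
        then show "V \<in> opens (BB t U)" using Us \<open>Q \<in> opens t\<close> by (auto simp: opens_std)
      next
        fix V assume "V \<in> opens (BB t U)"
        then obtain Q where Q: "Q \<in> opens t" "V = std_map U ` (Q \<inter> U)" using Us by (auto simp: opens_std)
        have "Q \<inter> U \<in> {Q \<in> opens t. Q \<subseteq> U}" using opens_Int[OF Q(1) U] by auto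
        then show "V \<in> ?h ` {Q \<in> opens t. Q \<subseteq> U}" using Q(2) by blast
      qed
    qed
    have vals: "F (AA t U) (std_restr (BB t U) ({1..deg (BB t U)} - ?h Q)) (std_restr (BB t U) (?h Q))
       = F (std_restr t ({1..?n} - U)) (std_restr t (U - Q)) (std_restr t Q)"
      if Q: "Q \<in> {Q \<in> opens t. Q \<subseteq> U}" for Q
    proof -
      have "{1..deg (BB t U)} - ?h Q = std_map U ` (U - Q)"
        using img_diff[OF fU, of Q] Us Q by (simp add: deg_std)
      moreover have s1: "U - Q \<subseteq> U" by auto
      moreover have s2: "Q \<subseteq> U" using Q by auto
      ultimately show ?thesis using std_std[OF Us s1] std_std[OF Us s2] by simp
    qed
    have "(\<Sum>W\<in>opens (BB t U). F (AA t U) (std_restr (BB t U) ({1..deg (BB t U)} - W)) (std_restr (BB t U) W))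
      = (\<Sum>Q\<in>{Q \<in> opens t. Q \<subseteq> U}. F (AA t U) (std_restr (BB t U) ({1..deg (BB t U)} - ?h Q)) (std_restr (BB t U) (?h Q)))"
      by (rule sum.reindex_bij_betw[OF bij, symmetric])
    also have "\<dots> = (\<Sum>Q\<in>{Q \<in> opens t. Q \<subseteq> U}. F (std_restr t ({1..?n} - U)) (std_restr t (U - Q)) (std_restr t Q))"
      by (rule sum.cong[OF refl vals])
    finally show ?thesis .
  qed
  have "(\<Sum>U\<in>opens t. \<Sum>W\<in>opens (BB t U).
      F (AA t U) (std_restr (BB t U) ({1..deg (BB t U)} - W)) (std_restr (BB t U) W)) =
      (\<Sum>U\<in>opens t. \<Sum>Q\<in>{Q \<in> opens t. Q \<subseteq> U}. F (std_restr t ({1..?n} - U)) (std_restr t (U - Q)) (std_restr t Q))"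
    using inner by (rule sum.cong[OF refl])
  also have "\<dots> = tri t F"
    unfolding tri_def by (rule sum.swap_restrict[symmetric]) simp_all
  finally show ?thesis .
qed

lemma std_full_Suc[simp]: "std_restr t {Suc 0..deg t} = t"
  using std_full[of t] by simp

declare std_full[simp] std_emptyset[simp]

lemma delta_def': "top_delta t = (\<Sum>U\<in>opens t. bvec (AA t U, BB t U))"
  by (simp add: top_delta_def)

lemma delta_one: "top_delta top_one = bvec (top_one, top_one)"
  by (simp add: top_delta_def std_emptyset)

lemma delta_dot: "(top_delta (top_dot a b) :: _ \<Rightarrow>\<^sub>0 'k::field) =
   (\<Sum>U\<in>opens a. \<Sum>V\<in>opens b. bvec (top_dot (AA a U) (AA b V), top_dot (BB a U) (BB b V)))"
proof -
  let ?h = "\<lambda>(U, V). U \<union> shift V (deg a)"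
  have inj: "inj_on ?h (opens a \<times> opens b)"
  proof (rule inj_onI, clarify)
    fix U1 V1 U2 V2 assume h: "U1 \<in> opens a" "V1 \<in> opens b" "U2 \<in> opens a" "V2 \<in> opens b"
      "U1 \<union> shift V1 (deg a) = U2 \<union> shift V2 (deg a)"
    show "U1 = U2 \<and> V1 = V2"
      by (rule split_eq[OF opens_sub[OF h(1)] opens_sub[OF h(3)] opens_sub[OF h(2)] opens_sub[OF h(4)] h(5)])
  qed
  have vals: "(bvec (AA (top_dot a b) (?h p), BB (top_dot a b) (?h p)) :: _ \<Rightarrow>\<^sub>0 'k) =
     bvec (top_dot (AA a (fst p)) (AA b (snd p)), top_dot (BB a (fst p)) (BB b (snd p)))"
    if p: "p \<in> opens a \<times> opens b" for p
  proof -
    obtain U V where pUV: "p = (U, V)" "U \<in> opens a" "V \<in> opens b" using p by auto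
    have Us: "U \<subseteq> {1..deg a}" and Vs: "V \<subseteq> {1..deg b}" using pUV opens_sub by auto
    have c: "{1..deg (top_dot a b)} - (U \<union> shift V (deg a)) = ({1..deg a} - U) \<union> shift ({1..deg b} - V) (deg a)"
      using split_compl[OF Us Vs] by simp
    have "AA (top_dot a b) (U \<union> shift V (deg a)) = top_dot (AA a U) (AA b V)"
      unfolding c by (rule std_dot) auto
    moreover have "BB (top_dot a b) (U \<union> shift V (deg a)) = top_dot (BB a U) (BB b V)"
      by (rule std_dot[OF Us Vs])
    ultimately show ?thesis using pUV by simp
  qed
  have "top_delta (top_dot a b) = (\<Sum>X\<in>?h ` (opens a \<times> opens b). (bvec (AA (top_dot a b) X, BB (top_dot a b) X) :: _ \<Rightarrow>\<^sub>0 'k))"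
    unfolding delta_def' opens_dot dots_img ..
  also have "\<dots> = (\<Sum>p\<in>opens a \<times> opens b. bvec (AA (top_dot a b) (?h p), BB (top_dot a b) (?h p)))"
    by (rule sum.reindex[OF inj, unfolded comp_def])
  also have "\<dots> = (\<Sum>p\<in>opens a \<times> opens b. bvec (top_dot (AA a (fst p)) (AA b (snd p)), top_dot (BB a (fst p)) (BB b (snd p))))"
    by (rule sum.cong[OF refl vals])
  also have "\<dots> = (\<Sum>U\<in>opens a. \<Sum>V\<in>opens b. bvec (top_dot (AA a U) (AA b V), top_dot (BB a U) (BB b V)))"
    by (simp add: sum.cartesian_product case_prod_beta)
  finally show ?thesis .
qed

lemma delta_iota: "(top_delta (top_iota t) :: _ \<Rightarrow>\<^sub>0 'k::field) =
   (\<Sum>U\<in>opens t. bvec (top_iota (BB t U), top_iota (AA t U)))"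
proof -
  let ?h = "\<lambda>U. {1..deg t} - U"
  have inj: "inj_on ?h (opens t)"
  proof (rule inj_onI)
    fix U V assume "U \<in> opens t" "V \<in> opens t" "?h U = ?h V"
    then show "U = V" using opens_sub[of U t] opens_sub[of V t] by blast
  qed
  have vals: "(bvec (AA (top_iota t) (?h U), BB (top_iota t) (?h U)) :: _ \<Rightarrow>\<^sub>0 'k) =
      bvec (top_iota (BB t U), top_iota (AA t U))" if U: "U \<in> opens t" for U
  proof -
    have "{1..deg t} - ({1..deg t} - U) = U" using opens_sub[OF U] by auto
    then show ?thesis using std_iota[of U t] std_iota[of "{1..deg t} - U" t] opens_sub[OF U] by simp
  qed
  have "top_delta (top_iota t) = (\<Sum>X\<in>?h ` opens t. (bvec (AA (top_iota t) X, BB (top_iota t) X) :: _ \<Rightarrow>\<^sub>0 'k))"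
    unfolding delta_def' opens_iota deg_iota ..
  also have "\<dots> = (\<Sum>U\<in>opens t. bvec (AA (top_iota t) (?h U), BB (top_iota t) (?h U)))"
    by (rule sum.reindex[OF inj, unfolded comp_def])
  also have "\<dots> = (\<Sum>U\<in>opens t. bvec (top_iota (BB t U), top_iota (AA t U)))"
    by (rule sum.cong[OF refl vals])
  finally show ?thesis .
qed

lemma delta_down: "(top_delta (top_down a b) :: _ \<Rightarrow>\<^sub>0 'k::field) =
   (\<Sum>U\<in>opens a. bvec (AA a U, top_down (BB a U) b)) + (\<Sum>V\<in>opens b. bvec (top_down a (AA b V), BB b V))
   - bvec (a, b)"
proof -
  let ?n = "deg a" and ?m = "deg b"
  let ?S = "shift {1..?m} ?n"
  let ?g = "\<lambda>X. (bvec (AA (top_down a b) X, BB (top_down a b) X) :: _ \<Rightarrow>\<^sub>0 'k)"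
  let ?L = "(\<lambda>U. U \<union> ?S) ` opens a" and ?R = "(\<lambda>V. shift V ?n) ` opens b"
  have ns: "{1..?n} \<subseteq> {1..?n}" and ms: "{1..?m} \<subseteq> {1..?m}" and es: "{} \<subseteq> {1..?n}" "{} \<subseteq> {1..?m}" by auto
  have opL: "opens (top_down a b) = ?L \<union> ?R"
    unfolding opens_down downs_def by (simp add: Setcompr_eq_image)
  have disj: "U \<inter> ?S = {}" if "U \<in> opens a" for U
    using opens_sub[OF that] shift_gt[of "{1..?m}" ?m _ ?n] by fastforce
  have LR: "?L \<inter> ?R = {?S}"
  proof (rule set_eqI, rule iffI)
    fix X assume "X \<in> ?L \<inter> ?R"
    then obtain U V where UV: "U \<in> opens a" "V \<in> opens b" "X = U \<union> ?S" "X = shift V ?n" by blast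
    have "shift V ?n \<subseteq> ?S" using opens_sub[OF UV(2)] by (rule shift_mono)
    then have "U = {}" using UV disj[OF UV(1)] by blast
    then show "X \<in> {?S}" using UV by simp
  next
    fix X assume "X \<in> {?S}"
    then have "X = {} \<union> ?S" "X = shift {1..?m} ?n" by auto
    then show "X \<in> ?L \<inter> ?R" using opens_empty[of a] opens_full[of b] by blast
  qed
  have gS: "?g ?S = bvec (a, b)"
  proof -
    have "{1..deg (top_down a b)} - ?S = {1..?n} \<union> shift {} ?n"
      using split_compl[OF es(1) ms] by simp
    then have "AA (top_down a b) ?S = top_down (std_restr a {1..?n}) (std_restr b {})"
      using std_down[OF ns es(2)] by simp
    moreover have "BB (top_down a b) ?S = top_down (std_restr a {}) (std_restr b {1..?m})"
      using std_down[OF es(1) ms] by simp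
    ultimately show ?thesis by (simp add: std_full std_emptyset)
  qed
  have injL: "inj_on (\<lambda>U. U \<union> ?S) (opens a)"
  proof (rule inj_onI)
    fix U V assume "U \<in> opens a" "V \<in> opens a" "U \<union> ?S = V \<union> ?S"
    then show "U = V" using disj by blast
  qed
  have injR: "inj_on (\<lambda>V. shift V ?n) (opens b)"
    by (rule inj_onI) (simp add: shift_inj)
  have valL: "?g (U \<union> ?S) = bvec (AA a U, top_down (BB a U) b)" if U: "U \<in> opens a" for U
  proof -
    have Us: "U \<subseteq> {1..?n}" using opens_sub[OF U] .
    have "{1..deg (top_down a b)} - (U \<union> ?S) = ({1..?n} - U) \<union> shift {} ?n"
      using split_compl[OF Us ms] by simp
    then have "AA (top_down a b) (U \<union> ?S) = top_down (AA a U) (std_restr b {})"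
      using std_down[of "{1..?n} - U" a "{}" b] by simp
    moreover have "BB (top_down a b) (U \<union> ?S) = top_down (BB a U) (std_restr b {1..?m})"
      using std_down[OF Us ms] by simp
    ultimately show ?thesis by (simp add: std_full std_emptyset)
  qed
  have valR: "?g (shift V ?n) = bvec (top_down a (AA b V), BB b V)" if V: "V \<in> opens b" for V
  proof -
    have Vs: "V \<subseteq> {1..?m}" using opens_sub[OF V] .
    have "{1..deg (top_down a b)} - ({} \<union> shift V ?n) = ({1..?n} - {}) \<union> shift ({1..?m} - V) ?n"
      using split_compl[OF es(1) Vs] by simp
    then have "AA (top_down a b) (shift V ?n) = top_down (std_restr a {1..?n}) (AA b V)"
      using std_down[of "{1..?n}" a "{1..?m} - V" b] by simp
    moreover have "BB (top_down a b) ({} \<union> shift V ?n) = top_down (std_restr a {}) (BB b V)"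
      using std_down[OF es(1) Vs] by simp
    ultimately show ?thesis by (simp add: std_full std_emptyset)
  qed
  have fin: "finite ?L" "finite ?R" by auto
  have "top_delta (top_down a b) + ?g ?S = sum ?g (?L \<union> ?R) + sum ?g (?L \<inter> ?R)"
    using LR unfolding delta_def' opL by simp
  also have "\<dots> = sum ?g ?L + sum ?g ?R" by (rule sum.union_inter[OF fin])
  also have "sum ?g ?L = (\<Sum>U\<in>opens a. bvec (AA a U, top_down (BB a U) b))"
    using sum.reindex[OF injL, of ?g] valL by (simp add: comp_def)
  also have "sum ?g ?R = (\<Sum>V\<in>opens b. bvec (top_down a (AA b V), BB b V))"
    using sum.reindex[OF injR, of ?g] valR by (simp add: comp_def)
  finally show ?thesis using gS by (simp add: algebra_simps)
qed

lemma lin_bilin: "lin \<psi> (bilin \<mu> x (y :: _ \<Rightarrow>\<^sub>0 'k::field)) = bilin (\<lambda>a b. lin \<psi> (\<mu> a b)) x y"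
  unfolding bilin_def by (simp add: lin_lin)

lemma bilin_lin_lin: "bilin \<mu> (lin \<phi> x) (lin \<psi> (y :: _ \<Rightarrow>\<^sub>0 'k::field)) = bilin (\<lambda>a b. bilin \<mu> (\<phi> a) (\<psi> b)) x y"
proof -
  have "bilin \<mu> (lin \<phi> x) (lin \<psi> y) = lin (\<lambda>a. bilin \<mu> (\<phi> a) (lin \<psi> y)) x" by (rule bilin_lin1)
  also have "\<dots> = lin (\<lambda>a. lin (\<lambda>b. bilin \<mu> (\<phi> a) (\<psi> b)) y) x" by (simp only: bilin_lin2)
  also have "\<dots> = bilin (\<lambda>a b. bilin \<mu> (\<phi> a) (\<psi> b)) x y" by (simp only: bilin_def)
  finally show ?thesis .
qed

lemma bilin_cong: "(\<And>a b. \<mu> a b = \<nu> a b) \<Longrightarrow> bilin \<mu> x y = bilin \<nu> x y"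
  unfolding bilin_def by (intro lin_ext) blast

lemma bilin_fun_add: "bilin (\<lambda>a b. \<mu> a b + \<nu> a b) x (y :: _ \<Rightarrow>\<^sub>0 'k::field) = bilin \<mu> x y + bilin \<nu> x y"
  unfolding bilin_def by (simp add: lin_fun_add)

lemma bilin_fun_diff: "bilin (\<lambda>a b. \<mu> a b - \<nu> a b) x (y :: _ \<Rightarrow>\<^sub>0 'k::field) = bilin \<mu> x y - bilin \<nu> x y"
  unfolding bilin_def by (simp add: lin_fun_diff)

lemma linfun_bilin: "linfun e (bilin \<mu> x (y :: _ \<Rightarrow>\<^sub>0 'k::field)) = linfun (\<lambda>a. linfun (\<lambda>b. linfun e (\<mu> a b)) y) x"
  unfolding bilin_def by (simp add: linfun_lin)

lemma alg_bvec[simp]: "alg_mult mu (bvec a) (bvec b :: _ \<Rightarrow>\<^sub>0 'k::field) = bvec (mu a b)"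
  unfolding alg_mult_def by simp

lemma tens_bvec[simp]: "tens (bvec a) (bvec b :: _ \<Rightarrow>\<^sub>0 'k::field) = bvec (a, b)"
  unfolding tens_def by simp

lemma tens_mult_bvec[simp]: "tens_mult m (bvec (a, b)) (bvec (c, d) :: _ \<Rightarrow>\<^sub>0 'k::field) = tens (m (bvec a) (bvec c)) (m (bvec b) (bvec d))"
  unfolding tens_mult_def by simp

lemma unital_assocI:
  assumes "\<And>a b c. mu (mu a b) c = mu a (mu b c)" "\<And>a. mu e a = a" "\<And>a. mu a e = a"
  shows "unital_assoc mu e TYPE('k::field)"
  unfolding unital_assoc_def
proof (intro allI conjI)
  fix x y z :: "_ \<Rightarrow>\<^sub>0 'k"
  show "alg_mult mu (alg_mult mu x y) z = alg_mult mu x (alg_mult mu y z)"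
    unfolding alg_mult_def bilin_def by (simp add: lin_lin assms(1))
next
  fix x :: "_ \<Rightarrow>\<^sub>0 'k"
  show "alg_mult mu (bvec e) x = x" unfolding alg_mult_def bilin_def by (simp add: assms(2))
  show "alg_mult mu x (bvec e) = x" unfolding alg_mult_def bilin_def by (simp add: assms(3))
qed

lemma alg_assoc: "alg_mult top_dot (alg_mult top_dot x y) (z :: _ \<Rightarrow>\<^sub>0 'k::field) = alg_mult top_dot x (alg_mult top_dot y z)"
  unfolding alg_mult_def bilin_def by (simp add: lin_lin dot_assoc)

lemma alg_one_left[simp]: "alg_mult top_dot (bvec top_one) (x :: _ \<Rightarrow>\<^sub>0 'k::field) = x"
  unfolding alg_mult_def bilin_def by simp
lemma alg_one_right[simp]: "alg_mult top_dot x (bvec top_one :: _ \<Rightarrow>\<^sub>0 'k::field) = x"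
  unfolding alg_mult_def bilin_def by simp

definition eps :: "ftop \<Rightarrow> 'k::field" where "eps t = (if deg t = 0 then 1 else 0)"

lemma opens_full_Suc[simp]: "{Suc 0..deg t} \<in> opens t"
  using opens_full[of t] by simp

lemma eps_one[simp]: "eps top_one = 1" by (simp add: eps_def)

lemma eps_AA: "U \<in> opens t \<Longrightarrow> eps (AA t U) = (if U = {1..deg t} then 1 else 0)"
proof -
  assume U: "U \<in> opens t"
  then have "U \<subseteq> {1..deg t}" by (rule opens_sub)
  then have "card ({1..deg t} - U) = 0 \<longleftrightarrow> U = {1..deg t}" by auto
  then show ?thesis unfolding eps_def by (simp add: deg_std)
qed

lemma eps_BB: "U \<in> opens t \<Longrightarrow> eps (BB t U) = (if U = {} then 1 else 0)"
proof -
  assume U: "U \<in> opens t"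
  then have "U \<subseteq> {1..deg t}" by (rule opens_sub)
  moreover then have "finite U" using finite_subset by auto
  ultimately show ?thesis unfolding eps_def by (simp add: deg_std)
qed

lemma counit_sum1: "(\<Sum>U\<in>opens t. smul (eps (AA t U)) (f (BB t U)) :: _ \<Rightarrow>\<^sub>0 'k::field) = f t"
proof -
  have "(\<Sum>U\<in>opens t. smul (eps (AA t U)) (f (BB t U)) :: _ \<Rightarrow>\<^sub>0 'k) =
        (\<Sum>U\<in>opens t. if U = {1..deg t} then f (BB t U) else 0)"
  proof (rule sum.cong[OF refl])
    fix U assume "U \<in> opens t"
    then show "smul (eps (AA t U)) (f (BB t U)) = (if U = {1..deg t} then f (BB t U) else 0)"
    proof -
      have "eps (AA t U) = (if U = {1..deg t} then (1::'k) else 0)" by (rule eps_AA) fact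
      then show ?thesis by simp
    qed
  qed
  also have "\<dots> = f t" by (simp add: sum.delta)
  finally show ?thesis .
qed

lemma counit_sum2: "(\<Sum>U\<in>opens t. smul (eps (BB t U)) (f (AA t U)) :: _ \<Rightarrow>\<^sub>0 'k::field) = f t"
proof -
  have "(\<Sum>U\<in>opens t. smul (eps (BB t U)) (f (AA t U)) :: _ \<Rightarrow>\<^sub>0 'k) =
        (\<Sum>U\<in>opens t. if U = {} then f (AA t U) else 0)"
  proof (rule sum.cong[OF refl])
    fix U assume "U \<in> opens t"
    then show "smul (eps (BB t U)) (f (AA t U)) = (if U = {} then f (AA t U) else 0)"
    proof -
      have "eps (BB t U) = (if U = {} then (1::'k) else 0)" by (rule eps_BB) fact
      then show ?thesis by simp
    qed
  qed
  also have "\<dots> = f t" by (simp add: sum.delta)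
  finally show ?thesis .
qed

lemma lin_delta: "lin G (top_delta t :: _ \<Rightarrow>\<^sub>0 'k::field) = (\<Sum>U\<in>opens t. G (AA t U, BB t U))"
  unfolding delta_def' by (simp add: lin_sum)

lemma delta_op': "(top_delta_op t :: _ \<Rightarrow>\<^sub>0 'k::field) = (\<Sum>U\<in>opens t. bvec (BB t U, AA t U))"
  unfolding top_delta_op_def tflip_def by (simp add: lin_delta)

lemma lin_delta_op: "lin G (top_delta_op t :: _ \<Rightarrow>\<^sub>0 'k::field) = (\<Sum>U\<in>opens t. G (BB t U, AA t U))"
  unfolding delta_op' by (simp add: lin_sum)

lemma counit_delta: "is_counit (top_delta :: ftop \<Rightarrow> (ftop \<times> ftop \<Rightarrow>\<^sub>0 'k::field)) eps"
  unfolding is_counit_def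
proof (intro allI conjI)
  fix x :: "_ \<Rightarrow>\<^sub>0 'k"
  show "lin (\<lambda>(a, b). smul (eps a) (bvec b)) (lin top_delta x) = x"
    using counit_sum1[where f="bvec :: ftop \<Rightarrow> ftop \<Rightarrow>\<^sub>0 'k"] by (simp add: lin_lin lin_delta)
  show "lin (\<lambda>(a, b). smul (eps b) (bvec a)) (lin top_delta x) = x"
    using counit_sum2[where f="bvec :: ftop \<Rightarrow> ftop \<Rightarrow>\<^sub>0 'k"] by (simp add: lin_lin lin_delta)
qed

lemma counit_delta_op: "is_counit (top_delta_op :: ftop \<Rightarrow> (ftop \<times> ftop \<Rightarrow>\<^sub>0 'k::field)) eps"
  unfolding is_counit_def
proof (intro allI conjI)
  fix x :: "_ \<Rightarrow>\<^sub>0 'k"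
  show "lin (\<lambda>(a, b). smul (eps a) (bvec b)) (lin top_delta_op x) = x"
    using counit_sum2[where f="bvec :: ftop \<Rightarrow> ftop \<Rightarrow>\<^sub>0 'k"] by (simp add: lin_lin lin_delta_op)
  show "lin (\<lambda>(a, b). smul (eps b) (bvec a)) (lin top_delta_op x) = x"
    using counit_sum1[where f="bvec :: ftop \<Rightarrow> ftop \<Rightarrow>\<^sub>0 'k"] by (simp add: lin_lin lin_delta_op)
qed

lemma lookup_tri: "Poly_Mapping.lookup (tri t F) k = tri t (\<lambda>X Y Z. Poly_Mapping.lookup (F X Y Z) k)"
  unfolding tri_def by (simp add: lookup_sum)

lemma tri_cong: "(\<And>X Y Z. F X Y Z = G X Y Z) \<Longrightarrow> tri t F = tri t G"
  unfolding tri_def by simp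

lemma tmap_lin: "tmap F G (lin \<phi> (x :: _ \<Rightarrow>\<^sub>0 'k::field)) = lin (\<lambda>t. tmap F G (\<phi> t)) x"
  unfolding tmap_def by (simp add: lin_lin)

lemma tens_sum1: "tens (\<Sum>i\<in>I. u i) (v :: _ \<Rightarrow>\<^sub>0 'k::field) = (\<Sum>i\<in>I. tens (u i) v)"
  unfolding tens_def by (simp add: bilin_sum1)
lemma tens_sum2: "tens u (\<Sum>i\<in>I. v i :: _ \<Rightarrow>\<^sub>0 'k::field) = (\<Sum>i\<in>I. tens u (v i))"
  unfolding tens_def by (simp add: bilin_sum2)

lemma tens_mult_sum1: "tens_mult m (\<Sum>i\<in>I. u i) (v :: _ \<Rightarrow>\<^sub>0 'k::field) = (\<Sum>i\<in>I. tens_mult m (u i) v)"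
  unfolding tens_mult_def by (simp add: bilin_sum1)
lemma tens_mult_sum2: "tens_mult m u (\<Sum>i\<in>I. v i :: _ \<Rightarrow>\<^sub>0 'k::field) = (\<Sum>i\<in>I. tens_mult m u (v i))"
  unfolding tens_mult_def by (simp add: bilin_sum2)

lemma coassoc_left: "(tmap (lin top_delta) id (top_delta t) :: _ \<Rightarrow>\<^sub>0 'k::field) = tri t (\<lambda>X Y Z. bvec ((X, Y), Z))"
proof -
  have "(tmap (lin top_delta) id (top_delta t) :: _ \<Rightarrow>\<^sub>0 'k) =
     (\<Sum>U\<in>opens t. \<Sum>V\<in>opens (AA t U). bvec ((std_restr (AA t U) ({1..deg (AA t U)} - V), std_restr (AA t U) V), BB t U))"
    unfolding tmap_def by (simp add: lin_delta delta_def' tens_sum1 lin_sum)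
  also have "\<dots> = tri t (\<lambda>X Y Z. bvec ((X, Y), Z))" by (rule tri_left)
  finally show ?thesis .
qed

lemma coassoc_right: "(tmap id (lin top_delta) (top_delta t) :: _ \<Rightarrow>\<^sub>0 'k::field) = tri t (\<lambda>X Y Z. bvec (X, (Y, Z)))"
proof -
  have "(tmap id (lin top_delta) (top_delta t) :: _ \<Rightarrow>\<^sub>0 'k) =
     (\<Sum>U\<in>opens t. \<Sum>W\<in>opens (BB t U). bvec (AA t U, (std_restr (BB t U) ({1..deg (BB t U)} - W), std_restr (BB t U) W)))"
    unfolding tmap_def by (simp add: lin_delta delta_def' tens_sum2 lin_sum)
  also have "\<dots> = tri t (\<lambda>X Y Z. bvec (X, (Y, Z)))" by (rule tri_right)
  finally show ?thesis .
qed

lemma coassoc_op_left: "(tmap (lin top_delta_op) id (top_delta_op t) :: _ \<Rightarrow>\<^sub>0 'k::field) = tri t (\<lambda>X Y Z. bvec ((Z, Y), X))"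
proof -
  have "(tmap (lin top_delta_op) id (top_delta_op t) :: _ \<Rightarrow>\<^sub>0 'k) =
     (\<Sum>U\<in>opens t. \<Sum>W\<in>opens (BB t U). bvec ((std_restr (BB t U) W, std_restr (BB t U) ({1..deg (BB t U)} - W)), AA t U))"
    unfolding tmap_def by (simp add: lin_delta_op delta_op' tens_sum1 lin_sum)
  also have "\<dots> = tri t (\<lambda>X Y Z. bvec ((Z, Y), X))" by (rule tri_right)
  finally show ?thesis .
qed

lemma coassoc_op_right: "(tmap id (lin top_delta_op) (top_delta_op t) :: _ \<Rightarrow>\<^sub>0 'k::field) = tri t (\<lambda>X Y Z. bvec (Z, (Y, X)))"
proof -
  have "(tmap id (lin top_delta_op) (top_delta_op t) :: _ \<Rightarrow>\<^sub>0 'k) =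
     (\<Sum>U\<in>opens t. \<Sum>V\<in>opens (AA t U). bvec (BB t U, (std_restr (AA t U) V, std_restr (AA t U) ({1..deg (AA t U)} - V))))"
    unfolding tmap_def by (simp add: lin_delta_op delta_op' tens_sum2 lin_sum)
  also have "\<dots> = tri t (\<lambda>X Y Z. bvec (Z, (Y, X)))" by (rule tri_left)
  finally show ?thesis .
qed

lemma coassoc_delta: "coassoc (top_delta :: ftop \<Rightarrow> (ftop \<times> ftop \<Rightarrow>\<^sub>0 'k::field))"
  unfolding coassoc_def
proof (intro allI)
  fix x :: "_ \<Rightarrow>\<^sub>0 'k" and a b c
  have "\<And>t. Poly_Mapping.lookup (tmap (lin top_delta) id (top_delta t) :: _ \<Rightarrow>\<^sub>0 'k) ((a, b), c) =
             Poly_Mapping.lookup (tmap id (lin top_delta) (top_delta t) :: _ \<Rightarrow>\<^sub>0 'k) (a, (b, c))"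
    unfolding coassoc_left coassoc_right lookup_tri by (rule tri_cong) (simp add: lookup_bvec)
  then show "Poly_Mapping.lookup (tmap (lin top_delta) id (lin top_delta x)) ((a, b), c) =
     Poly_Mapping.lookup (tmap id (lin top_delta) (lin top_delta x)) (a, b, c)"
    by (simp add: tmap_lin lookup_lin)
qed

lemma coassoc_delta_op: "coassoc (top_delta_op :: ftop \<Rightarrow> (ftop \<times> ftop \<Rightarrow>\<^sub>0 'k::field))"
  unfolding coassoc_def
proof (intro allI)
  fix x :: "_ \<Rightarrow>\<^sub>0 'k" and a b c
  have "\<And>t. Poly_Mapping.lookup (tmap (lin top_delta_op) id (top_delta_op t) :: _ \<Rightarrow>\<^sub>0 'k) ((a, b), c) =
             Poly_Mapping.lookup (tmap id (lin top_delta_op) (top_delta_op t) :: _ \<Rightarrow>\<^sub>0 'k) (a, (b, c))"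
    unfolding coassoc_op_left coassoc_op_right lookup_tri by (rule tri_cong) (simp add: lookup_bvec)
  then show "Poly_Mapping.lookup (tmap (lin top_delta_op) id (lin top_delta_op x)) ((a, b), c) =
     Poly_Mapping.lookup (tmap id (lin top_delta_op) (lin top_delta_op x)) (a, b, c)"
    by (simp add: tmap_lin lookup_lin)
qed

lemma counital_delta: "counital_coalg (top_delta :: ftop \<Rightarrow> (ftop \<times> ftop \<Rightarrow>\<^sub>0 'k::field))"
  unfolding counital_coalg_def using coassoc_delta counit_delta by blast

lemma counital_delta_op: "counital_coalg (top_delta_op :: ftop \<Rightarrow> (ftop \<times> ftop \<Rightarrow>\<^sub>0 'k::field))"
  unfolding counital_coalg_def using coassoc_delta_op counit_delta_op by blast

lemma tm_bvec: "tens_mult (alg_mult mu) (bvec (a, b)) (bvec (c, d) :: _ \<Rightarrow>\<^sub>0 'k::field) = bvec (mu a c, mu b d)"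
  by simp

lemma mult_basis: "(top_delta (top_dot a b) :: _ \<Rightarrow>\<^sub>0 'k::field) = tens_mult (alg_mult top_dot) (top_delta a) (top_delta b)"
  unfolding delta_dot delta_def'[of a] delta_def'[of b] by (simp add: tens_mult_sum1 tens_mult_sum2) (rule sum.swap)

lemma mult_basis_op: "(top_delta_op (top_dot a b) :: _ \<Rightarrow>\<^sub>0 'k::field) = tens_mult (alg_mult top_dot) (top_delta_op a) (top_delta_op b)"
  unfolding top_delta_op_def delta_dot delta_def'[of a] delta_def'[of b] tflip_def
  by (simp add: tens_mult_sum1 tens_mult_sum2 lin_sum) (rule sum.swap)

lemma lin_alg: "lin \<psi> (alg_mult mu x (y :: _ \<Rightarrow>\<^sub>0 'k::field)) = bilin (\<lambda>a b. \<psi> (mu a b)) x y"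
  unfolding alg_mult_def by (simp add: lin_bilin)

lemma tens_mult_lin: "tens_mult m (lin \<phi> x) (lin \<psi> (y :: _ \<Rightarrow>\<^sub>0 'k::field)) = bilin (\<lambda>a b. tens_mult m (\<phi> a) (\<psi> b)) x y"
  unfolding tens_mult_def by (rule bilin_lin_lin)

lemma mult_delta: "lin top_delta (alg_mult top_dot x y) = tens_mult (alg_mult top_dot) (lin top_delta x) (lin (top_delta :: _ \<Rightarrow> (_ \<Rightarrow>\<^sub>0 'k::field)) y)"
  unfolding lin_alg tens_mult_lin by (rule bilin_cong) (rule mult_basis)

lemma mult_delta_op: "lin top_delta_op (alg_mult top_dot x y) = tens_mult (alg_mult top_dot) (lin top_delta_op x) (lin (top_delta_op :: _ \<Rightarrow> (_ \<Rightarrow>\<^sub>0 'k::field)) y)"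
  unfolding lin_alg tens_mult_lin by (rule bilin_cong) (rule mult_basis_op)

lemma eps_dot: "eps (top_dot a b) = (eps a * eps b :: 'k::field)"
  unfolding eps_def by simp

lemma eps_mult: "linfun eps (alg_mult top_dot x y) = linfun eps x * (linfun eps (y :: _ \<Rightarrow>\<^sub>0 'k::field))"
proof -
  have "linfun eps (alg_mult top_dot x y) = linfun (\<lambda>a. linfun (\<lambda>b. eps a * eps b) y) x"
    unfolding alg_mult_def linfun_bilin by (simp add: eps_dot)
  also have "\<dots> = linfun (\<lambda>a. eps a * linfun eps y) x"
    using linfun_fun_mult[of eps _ y] by (simp add: mult.commute)
  also have "\<dots> = linfun eps x * linfun eps y" by (rule linfun_fun_mult)
  finally show ?thesis .
qed

lemma delta_one': "(top_delta_op top_one :: _ \<Rightarrow>\<^sub>0 'k::field) = bvec (top_one, top_one)"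
  unfolding top_delta_op_def tflip_def by (simp add: delta_one)

lemma bialg_delta: "bialgebra top_dot top_one (top_delta :: ftop \<Rightarrow> (ftop \<times> ftop \<Rightarrow>\<^sub>0 'k::field))"
  unfolding bialgebra_def
proof (intro conjI allI)
  show "unital_assoc top_dot top_one TYPE('k)" by (rule unital_assocI) (auto simp: dot_assoc)
  show "counital_coalg (top_delta :: ftop \<Rightarrow> (ftop \<times> ftop \<Rightarrow>\<^sub>0 'k))" by (rule counital_delta)
  show "\<And>x y. lin top_delta (alg_mult top_dot x y) = tens_mult (alg_mult top_dot) (lin top_delta x) (lin (top_delta :: _ \<Rightarrow> (_ \<Rightarrow>\<^sub>0 'k)) y)"
    by (rule mult_delta)
  show "lin top_delta (bvec top_one) = tens (bvec top_one) (bvec top_one :: _ \<Rightarrow>\<^sub>0 'k)"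
    by (simp add: delta_one)
  show "\<exists>eps. is_counit (top_delta :: ftop \<Rightarrow> (ftop \<times> ftop \<Rightarrow>\<^sub>0 'k)) eps \<and> eps top_one = 1 \<and>
        (\<forall>x y. linfun eps (alg_mult top_dot x y) = linfun eps x * linfun eps y)"
    using counit_delta eps_mult eps_one by blast
qed

lemma bialg_delta_op: "bialgebra top_dot top_one (top_delta_op :: ftop \<Rightarrow> (ftop \<times> ftop \<Rightarrow>\<^sub>0 'k::field))"
  unfolding bialgebra_def
proof (intro conjI allI)
  show "unital_assoc top_dot top_one TYPE('k)" by (rule unital_assocI) (auto simp: dot_assoc)
  show "counital_coalg (top_delta_op :: ftop \<Rightarrow> (ftop \<times> ftop \<Rightarrow>\<^sub>0 'k))" by (rule counital_delta_op)
  show "\<And>x y. lin top_delta_op (alg_mult top_dot x y) = tens_mult (alg_mult top_dot) (lin top_delta_op x) (lin (top_delta_op :: _ \<Rightarrow> (_ \<Rightarrow>\<^sub>0 'k)) y)"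
    by (rule mult_delta_op)
  show "lin top_delta_op (bvec top_one) = tens (bvec top_one) (bvec top_one :: _ \<Rightarrow>\<^sub>0 'k)"
    by (simp add: delta_one')
  show "\<exists>eps. is_counit (top_delta_op :: ftop \<Rightarrow> (ftop \<times> ftop \<Rightarrow>\<^sub>0 'k)) eps \<and> eps top_one = 1 \<and>
        (\<forall>x y. linfun eps (alg_mult top_dot x y) = linfun eps x * linfun eps y)"
    using counit_delta_op eps_mult eps_one by blast
qed

lemma keys_delta: "(c, d) \<in> Poly_Mapping.keys (top_delta a :: _ \<Rightarrow>\<^sub>0 'k::field) \<Longrightarrow> deg c + deg d = deg a"
proof -
  assume h: "(c, d) \<in> Poly_Mapping.keys (top_delta a :: _ \<Rightarrow>\<^sub>0 'k)"
  have "Poly_Mapping.keys (top_delta a :: _ \<Rightarrow>\<^sub>0 'k) \<subseteq> (\<Union>U\<in>opens a. Poly_Mapping.keys (bvec (AA a U, BB a U) :: _ \<Rightarrow>\<^sub>0 'k))"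
    unfolding delta_def' by (rule keys_sum)
  with h obtain U where U: "U \<in> opens a" "(c, d) \<in> Poly_Mapping.keys (bvec (AA a U, BB a U) :: _ \<Rightarrow>\<^sub>0 'k)"
    by blast
  then have "c = AA a U" "d = BB a U" by auto
  moreover have Us: "U \<subseteq> {1..deg a}" using opens_sub[OF U(1)] .
  moreover have "finite U" using Us finite_subset by auto
  moreover have "card U \<le> deg a" using card_mono[OF _ Us] by simp
  ultimately show ?thesis by (simp add: deg_std card_Diff_subset)
qed

lemma graded_dot: "graded deg top_dot top_one (top_delta :: ftop \<Rightarrow> (ftop \<times> ftop \<Rightarrow>\<^sub>0 'k::field))"
  unfolding graded_def
proof (intro conjI allI impI)
  fix a c d assume "(c, d) \<in> Poly_Mapping.keys (top_delta a :: _ \<Rightarrow>\<^sub>0 'k)"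
  then show "deg c + deg d = deg a" by (rule keys_delta)
qed simp_all

lemma graded_down: "graded deg top_down top_one (top_delta :: ftop \<Rightarrow> (ftop \<times> ftop \<Rightarrow>\<^sub>0 'k::field))"
  unfolding graded_def
proof (intro conjI allI impI)
  fix a c d assume "(c, d) \<in> Poly_Mapping.keys (top_delta a :: _ \<Rightarrow>\<^sub>0 'k)"
  then show "deg c + deg d = deg a" by (rule keys_delta)
qed simp_all

lemma tens_lin1: "tens (lin \<phi> x) (bvec b :: _ \<Rightarrow>\<^sub>0 'k::field) = lin (\<lambda>a. tens (\<phi> a) (bvec b)) x"
  unfolding tens_def by (rule bilin_lin1)

lemma inf_basis: "(top_delta (top_down a b) :: _ \<Rightarrow>\<^sub>0 'k::field) =
   tens_mult (alg_mult top_down) (bvec (a, top_one)) (top_delta b) +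
   tens_mult (alg_mult top_down) (top_delta a) (bvec (top_one, b)) - bvec (a, b)"
  unfolding delta_down delta_def'[of a] delta_def'[of b]
  by (simp add: tens_mult_sum1 tens_mult_sum2 add.commute)

lemma inf_delta: "lin top_delta (alg_mult top_down x y) =
        tens_mult (alg_mult top_down) (tens x (bvec top_one)) (lin top_delta y)
        + tens_mult (alg_mult top_down) (lin top_delta x) (tens (bvec top_one) y)
        - tens x (y :: _ \<Rightarrow>\<^sub>0 'k::field)"
proof -
  have t1: "tens x (bvec top_one) = lin (\<lambda>a. bvec (a, top_one)) x"
    unfolding tens_def by (simp add: bilin_bvec2)
  have t2: "tens (bvec top_one) y = lin (\<lambda>b. bvec (top_one, b)) y"
    unfolding tens_def by (simp add: bilin_bvec1)
  show ?thesis
    unfolding lin_alg t1 t2 tens_mult_lin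
    unfolding tens_def bilin_fun_add[symmetric] bilin_fun_diff[symmetric]
    by (rule bilin_cong) (simp add: inf_basis)
qed

lemma infinitesimal: "infinitesimal_bialgebra top_down top_one (top_delta :: ftop \<Rightarrow> (ftop \<times> ftop \<Rightarrow>\<^sub>0 'k::field))"
  unfolding infinitesimal_bialgebra_def
proof (intro conjI allI)
  show "unital_assoc top_down top_one TYPE('k)" by (rule unital_assocI) (auto simp: down_assoc)
  show "counital_coalg (top_delta :: ftop \<Rightarrow> (ftop \<times> ftop \<Rightarrow>\<^sub>0 'k))" by (rule counital_delta)
  fix x y :: "_ \<Rightarrow>\<^sub>0 'k"
  show "lin top_delta (alg_mult top_down x y) =
        tens_mult (alg_mult top_down) (tens x (bvec top_one)) (lin top_delta y)
        + tens_mult (alg_mult top_down) (lin top_delta x) (tens (bvec top_one) y)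
        - tens x y" by (rule inf_delta)
qed

primrec SLf :: "nat \<Rightarrow> ftop \<Rightarrow> (ftop \<Rightarrow>\<^sub>0 'k::field)" where
  "SLf 0 t = bvec top_one"
| "SLf (Suc k) t = (if deg t = 0 then bvec top_one else
     - (\<Sum>U\<in>opens t - {{}}. alg_mult top_dot (SLf k (AA t U)) (bvec (BB t U))))"

primrec SRf :: "nat \<Rightarrow> ftop \<Rightarrow> (ftop \<Rightarrow>\<^sub>0 'k::field)" where
  "SRf 0 t = bvec top_one"
| "SRf (Suc k) t = (if deg t = 0 then bvec top_one else
     - (\<Sum>U\<in>opens t - {{1..deg t}}. alg_mult top_dot (bvec (AA t U)) (SRf k (BB t U))))"

lemma deg_AA_less: "U \<in> opens t \<Longrightarrow> U \<noteq> {} \<Longrightarrow> deg (AA t U) < deg t"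
proof -
  assume U: "U \<in> opens t" "U \<noteq> {}"
  have Us: "U \<subseteq> {1..deg t}" using opens_sub[OF U(1)] .
  have "finite U" using Us finite_subset by auto
  then have "card U > 0" using U(2) by auto
  moreover have "card U \<le> deg t" using card_mono[OF _ Us] by simp
  ultimately show ?thesis using Us by (simp add: deg_std card_Diff_subset \<open>finite U\<close>)
qed

lemma deg_BB_less: "U \<in> opens t \<Longrightarrow> U \<noteq> {1..deg t} \<Longrightarrow> deg (BB t U) < deg t"
proof -
  assume U: "U \<in> opens t" "U \<noteq> {1..deg t}"
  have Us: "U \<subseteq> {1..deg t}" using opens_sub[OF U(1)] .
  then have "U \<subset> {1..deg t}" using U(2) by auto
  then have "card U < card {1..deg t}" by (rule psubset_card_mono[rotated]) simp
  then show ?thesis using Us by (simp add: deg_std)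
qed

lemma SLf_stable: "deg t \<le> k \<Longrightarrow> deg t \<le> k' \<Longrightarrow> SLf k t = (SLf k' t :: _ \<Rightarrow>\<^sub>0 'k::field)"
proof (induction k arbitrary: k' t)
  case 0
  then show ?case by (cases k') auto
next
  case (Suc k)
  show ?case
  proof (cases "deg t = 0")
    case True then show ?thesis by (cases k') auto
  next
    case False
    then obtain k'' where k': "k' = Suc k''" using Suc.prems by (cases k') auto
    have "\<And>U. U \<in> opens t - {{}} \<Longrightarrow> (SLf k (AA t U) :: _ \<Rightarrow>\<^sub>0 'k) = SLf k'' (AA t U)"
    proof -
      fix U assume "U \<in> opens t - {{}}"
      then have "deg (AA t U) < deg t" using deg_AA_less by blast
      then show "(SLf k (AA t U) :: _ \<Rightarrow>\<^sub>0 'k) = SLf k'' (AA t U)"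
        using Suc.IH[of "AA t U" k''] Suc.prems k' by simp
    qed
    then have eq: "(\<Sum>U\<in>opens t - {{}}. alg_mult top_dot (SLf k (AA t U)) (bvec (BB t U)) :: _ \<Rightarrow>\<^sub>0 'k) =
      (\<Sum>U\<in>opens t - {{}}. alg_mult top_dot (SLf k'' (AA t U)) (bvec (BB t U)))"
      by (intro sum.cong refl) simp
    have "(SLf (Suc k) t :: _ \<Rightarrow>\<^sub>0 'k) = - (\<Sum>U\<in>opens t - {{}}. alg_mult top_dot (SLf k (AA t U)) (bvec (BB t U)))"
      using False by simp
    moreover have "(SLf k' t :: _ \<Rightarrow>\<^sub>0 'k) = - (\<Sum>U\<in>opens t - {{}}. alg_mult top_dot (SLf k'' (AA t U)) (bvec (BB t U)))"
      using False k' by simp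
    ultimately show ?thesis using eq by simp
  qed
qed

lemma SRf_stable: "deg t \<le> k \<Longrightarrow> deg t \<le> k' \<Longrightarrow> SRf k t = (SRf k' t :: _ \<Rightarrow>\<^sub>0 'k::field)"
proof (induction k arbitrary: k' t)
  case 0
  then show ?case by (cases k') auto
next
  case (Suc k)
  show ?case
  proof (cases "deg t = 0")
    case True then show ?thesis by (cases k') auto
  next
    case False
    then obtain k'' where k': "k' = Suc k''" using Suc.prems by (cases k') auto
    have "\<And>U. U \<in> opens t - {{1..deg t}} \<Longrightarrow> (SRf k (BB t U) :: _ \<Rightarrow>\<^sub>0 'k) = SRf k'' (BB t U)"
    proof -
      fix U assume "U \<in> opens t - {{1..deg t}}"
      then have "deg (BB t U) < deg t" using deg_BB_less by blast
      then show "(SRf k (BB t U) :: _ \<Rightarrow>\<^sub>0 'k) = SRf k'' (BB t U)"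
        using Suc.IH[of "BB t U" k''] Suc.prems k' by simp
    qed
    then have eq: "(\<Sum>U\<in>opens t - {{1..deg t}}. alg_mult top_dot (bvec (AA t U)) (SRf k (BB t U)) :: _ \<Rightarrow>\<^sub>0 'k) =
      (\<Sum>U\<in>opens t - {{1..deg t}}. alg_mult top_dot (bvec (AA t U)) (SRf k'' (BB t U)))"
      by (intro sum.cong refl) simp
    have "(SRf (Suc k) t :: _ \<Rightarrow>\<^sub>0 'k) = - (\<Sum>U\<in>opens t - {{1..deg t}}. alg_mult top_dot (bvec (AA t U)) (SRf k (BB t U)))"
      using False by simp
    moreover have "(SRf k' t :: _ \<Rightarrow>\<^sub>0 'k) = - (\<Sum>U\<in>opens t - {{1..deg t}}. alg_mult top_dot (bvec (AA t U)) (SRf k'' (BB t U)))"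
      using False k' by simp
    ultimately show ?thesis using eq by simp
  qed
qed

definition SL :: "ftop \<Rightarrow> (ftop \<Rightarrow>\<^sub>0 'k::field)" where "SL t = SLf (deg t) t"
definition SR :: "ftop \<Rightarrow> (ftop \<Rightarrow>\<^sub>0 'k::field)" where "SR t = SRf (deg t) t"

lemma SL_rec: "deg t \<noteq> 0 \<Longrightarrow> (SL t :: _ \<Rightarrow>\<^sub>0 'k::field) =
   - (\<Sum>U\<in>opens t - {{}}. alg_mult top_dot (SL (AA t U)) (bvec (BB t U)))"
proof -
  assume d: "deg t \<noteq> 0"
  then obtain k where k: "deg t = Suc k" by (cases "deg t") auto
  have "\<And>U. U \<in> opens t - {{}} \<Longrightarrow> (SLf k (AA t U) :: _ \<Rightarrow>\<^sub>0 'k) = SL (AA t U)"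
  proof -
    fix U assume "U \<in> opens t - {{}}"
    then have "deg (AA t U) < deg t" using deg_AA_less by blast
    then show "(SLf k (AA t U) :: _ \<Rightarrow>\<^sub>0 'k) = SL (AA t U)"
      unfolding SL_def using SLf_stable[of "AA t U" k "deg (AA t U)"] k by simp
  qed
  then have eq: "(\<Sum>U\<in>opens t - {{}}. alg_mult top_dot (SLf k (AA t U)) (bvec (BB t U)) :: _ \<Rightarrow>\<^sub>0 'k) =
      (\<Sum>U\<in>opens t - {{}}. alg_mult top_dot (SL (AA t U)) (bvec (BB t U)))"
    by (intro sum.cong refl) simp
  have "(SL t :: _ \<Rightarrow>\<^sub>0 'k) = SLf (Suc k) t" unfolding SL_def k ..
  also have "\<dots> = - (\<Sum>U\<in>opens t - {{}}. alg_mult top_dot (SLf k (AA t U)) (bvec (BB t U)))"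
    using k by simp
  finally show ?thesis unfolding eq .
qed

lemma SR_rec: "deg t \<noteq> 0 \<Longrightarrow> (SR t :: _ \<Rightarrow>\<^sub>0 'k::field) =
   - (\<Sum>U\<in>opens t - {{1..deg t}}. alg_mult top_dot (bvec (AA t U)) (SR (BB t U)))"
proof -
  assume d: "deg t \<noteq> 0"
  then obtain k where k: "deg t = Suc k" by (cases "deg t") auto
  have "\<And>U. U \<in> opens t - {{1..deg t}} \<Longrightarrow> (SRf k (BB t U) :: _ \<Rightarrow>\<^sub>0 'k) = SR (BB t U)"
  proof -
    fix U assume "U \<in> opens t - {{1..deg t}}"
    then have "deg (BB t U) < deg t" using deg_BB_less by blast
    then show "(SRf k (BB t U) :: _ \<Rightarrow>\<^sub>0 'k) = SR (BB t U)"
      unfolding SR_def using SRf_stable[of "BB t U" k "deg (BB t U)"] k by simp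
  qed
  then have eq: "(\<Sum>U\<in>opens t - {{1..deg t}}. alg_mult top_dot (bvec (AA t U)) (SRf k (BB t U)) :: _ \<Rightarrow>\<^sub>0 'k) =
      (\<Sum>U\<in>opens t - {{1..deg t}}. alg_mult top_dot (bvec (AA t U)) (SR (BB t U)))"
    by (intro sum.cong refl) simp
  have "(SR t :: _ \<Rightarrow>\<^sub>0 'k) = SRf (Suc k) t" unfolding SR_def k ..
  also have "\<dots> = - (\<Sum>U\<in>opens t - {{1..deg t}}. alg_mult top_dot (bvec (AA t U)) (SRf k (BB t U)))"
    using k by simp
  finally show ?thesis unfolding eq .
qed

lemma SL_one[simp]: "SL top_one = bvec top_one" unfolding SL_def by simp
lemma SR_one[simp]: "SR top_one = bvec top_one" unfolding SR_def by simp

lemma AA_empty[simp]: "AA t {} = t" by simp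
lemma BB_empty[simp]: "BB t {} = top_one" by simp
lemma AA_full[simp]: "AA t {1..deg t} = top_one" by simp
lemma BB_full[simp]: "BB t {1..deg t} = t" by simp

lemma LE: "(\<Sum>U\<in>opens t. alg_mult top_dot (SL (AA t U)) (bvec (BB t U))) = smul (eps t) (bvec top_one :: _ \<Rightarrow>\<^sub>0 'k::field)"
proof (cases "deg t = 0")
  case True
  then have t: "t = top_one" by (rule deg0_one)
  show ?thesis unfolding t by simp
next
  case False
  have "(\<Sum>U\<in>opens t. alg_mult top_dot (SL (AA t U)) (bvec (BB t U)) :: _ \<Rightarrow>\<^sub>0 'k) =
     alg_mult top_dot (SL (AA t {})) (bvec (BB t {})) + (\<Sum>U\<in>opens t - {{}}. alg_mult top_dot (SL (AA t U)) (bvec (BB t U)))"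
    by (rule sum.remove) simp_all
  also have "\<dots> = SL t + (\<Sum>U\<in>opens t - {{}}. alg_mult top_dot (SL (AA t U)) (bvec (BB t U)))"
    by simp
  also have "\<dots> = 0" by (subst SL_rec[OF False]) simp
  finally show ?thesis using False by (simp add: eps_def)
qed

lemma RE: "(\<Sum>U\<in>opens t. alg_mult top_dot (bvec (AA t U)) (SR (BB t U))) = smul (eps t) (bvec top_one :: _ \<Rightarrow>\<^sub>0 'k::field)"
proof (cases "deg t = 0")
  case True
  then have t: "t = top_one" by (rule deg0_one)
  show ?thesis unfolding t by simp
next
  case False
  have "(\<Sum>U\<in>opens t. alg_mult top_dot (bvec (AA t U)) (SR (BB t U)) :: _ \<Rightarrow>\<^sub>0 'k) =
     alg_mult top_dot (bvec (AA t {1..deg t})) (SR (BB t {1..deg t})) + (\<Sum>U\<in>opens t - {{1..deg t}}. alg_mult top_dot (bvec (AA t U)) (SR (BB t U)))"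
    by (rule sum.remove) simp_all
  also have "\<dots> = SR t + (\<Sum>U\<in>opens t - {{1..deg t}}. alg_mult top_dot (bvec (AA t U)) (SR (BB t U)))"
    by simp
  also have "\<dots> = 0" by (subst SR_rec[OF False]) simp
  finally show ?thesis using False by (simp add: eps_def)
qed

lemma alg_sum1: "alg_mult mu (\<Sum>i\<in>I. x i) (y :: _ \<Rightarrow>\<^sub>0 'k::field) = (\<Sum>i\<in>I. alg_mult mu (x i) y)"
  unfolding alg_mult_def by (rule bilin_sum1)
lemma alg_sum2: "alg_mult mu x (\<Sum>i\<in>I. y i :: _ \<Rightarrow>\<^sub>0 'k::field) = (\<Sum>i\<in>I. alg_mult mu x (y i))"
  unfolding alg_mult_def by (rule bilin_sum2)
lemma alg_smul1: "alg_mult mu (smul c x) (y :: _ \<Rightarrow>\<^sub>0 'k::field) = smul c (alg_mult mu x y)"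
  unfolding alg_mult_def by (rule bilin_smul1)
lemma alg_smul2: "alg_mult mu x (smul c y :: _ \<Rightarrow>\<^sub>0 'k::field) = smul c (alg_mult mu x y)"
  unfolding alg_mult_def by (rule bilin_smul2)

lemma SL_SR: "(SL t :: _ \<Rightarrow>\<^sub>0 'k::field) = SR t"
proof -
  let ?F = "\<lambda>X Y Z. alg_mult top_dot (alg_mult top_dot (SL X) (bvec Y)) (SR Z) :: _ \<Rightarrow>\<^sub>0 'k"
  let ?G = "\<lambda>X Y Z. alg_mult top_dot (SL X) (alg_mult top_dot (bvec Y) (SR Z)) :: _ \<Rightarrow>\<^sub>0 'k"
  have "tri t ?F = (\<Sum>U\<in>opens t. \<Sum>V\<in>opens (AA t U).
      ?F (std_restr (AA t U) ({1..deg (AA t U)} - V)) (std_restr (AA t U) V) (BB t U))"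
    by (rule tri_left[symmetric])
  also have "\<dots> = (\<Sum>U\<in>opens t. alg_mult top_dot (\<Sum>V\<in>opens (AA t U).
      alg_mult top_dot (SL (std_restr (AA t U) ({1..deg (AA t U)} - V))) (bvec (std_restr (AA t U) V))) (SR (BB t U)))"
    by (simp only: alg_sum1)
  also have "\<dots> = (\<Sum>U\<in>opens t. alg_mult top_dot (smul (eps (AA t U)) (bvec top_one)) (SR (BB t U)))"
    by (simp only: LE)
  also have "\<dots> = (\<Sum>U\<in>opens t. smul (eps (AA t U)) (SR (BB t U)))"
    by (simp add: alg_smul1)
  also have "\<dots> = SR t" by (rule counit_sum1)
  finally have 1: "tri t ?F = SR t" .
  have "tri t ?F = tri t ?G" by (rule tri_cong) (rule alg_assoc)
  also have "\<dots> = (\<Sum>U\<in>opens t. \<Sum>W\<in>opens (BB t U).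
      ?G (AA t U) (std_restr (BB t U) ({1..deg (BB t U)} - W)) (std_restr (BB t U) W))"
    by (rule tri_right[symmetric])
  also have "\<dots> = (\<Sum>U\<in>opens t. alg_mult top_dot (SL (AA t U)) (\<Sum>W\<in>opens (BB t U).
      alg_mult top_dot (bvec (std_restr (BB t U) ({1..deg (BB t U)} - W))) (SR (std_restr (BB t U) W))))"
    by (simp only: alg_sum2)
  also have "\<dots> = (\<Sum>U\<in>opens t. alg_mult top_dot (SL (AA t U)) (smul (eps (BB t U)) (bvec top_one)))"
    by (simp only: RE)
  also have "\<dots> = (\<Sum>U\<in>opens t. smul (eps (BB t U)) (SL (AA t U)))"
    by (simp add: alg_smul2)
  also have "\<dots> = SL t" by (rule counit_sum2)
  finally show ?thesis using 1 by simp
qed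

lemma RE': "(\<Sum>U\<in>opens t. alg_mult top_dot (bvec (AA t U)) (SL (BB t U))) = smul (eps t) (bvec top_one :: _ \<Rightarrow>\<^sub>0 'k::field)"
  unfolding SL_SR by (rule RE)

lemma hopf_delta: "hopf_algebra top_dot top_one (top_delta :: ftop \<Rightarrow> (ftop \<times> ftop \<Rightarrow>\<^sub>0 'k::field))"
  unfolding hopf_algebra_def
proof (intro conjI exI[of _ eps] exI[of _ SL] allI)
  show "bialgebra top_dot top_one (top_delta :: ftop \<Rightarrow> (ftop \<times> ftop \<Rightarrow>\<^sub>0 'k))" by (rule bialg_delta)
  show "is_counit (top_delta :: ftop \<Rightarrow> (ftop \<times> ftop \<Rightarrow>\<^sub>0 'k)) eps" by (rule counit_delta)
  fix x :: "_ \<Rightarrow>\<^sub>0 'k"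
  show "lin (\<lambda>(a, b). alg_mult top_dot (SL a) (bvec b)) (lin top_delta x) = smul (linfun eps x) (bvec top_one)"
    unfolding lin_lin smul_linfun by (rule lin_ext) (simp only: lin_delta prod.case LE)
  show "lin (\<lambda>(a, b). alg_mult top_dot (bvec a) (SL b)) (lin top_delta x) = smul (linfun eps x) (bvec top_one)"
    unfolding lin_lin smul_linfun by (rule lin_ext) (simp only: lin_delta prod.case RE')
qed

abbreviation iL :: "(ftop \<Rightarrow>\<^sub>0 'k::field) \<Rightarrow> (ftop \<Rightarrow>\<^sub>0 'k)" where
  "iL \<equiv> lin (\<lambda>t. bvec (top_iota t))"

lemma iL_alg: "iL (alg_mult top_dot x y) = alg_mult top_dot (iL x) (iL (y :: _ \<Rightarrow>\<^sub>0 'k::field))"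
proof -
  have "iL (alg_mult top_dot x y) = bilin (\<lambda>a b. bvec (top_iota (top_dot a b))) x y"
    by (simp add: lin_alg)
  also have "\<dots> = bilin (\<lambda>a b. alg_mult top_dot (bvec (top_iota a)) (bvec (top_iota b))) x y"
    by (rule bilin_cong) (simp add: iota_dot)
  also have "\<dots> = alg_mult top_dot (iL x) (iL y)"
    unfolding alg_mult_def by (rule bilin_lin_lin[symmetric])
  finally show ?thesis .
qed

lemma iL_iL[simp]: "iL (iL x) = (x :: _ \<Rightarrow>\<^sub>0 'k::field)"
  by (simp add: lin_lin)

lemma eps_iota[simp]: "eps (top_iota t) = eps t" by (simp add: eps_def)

definition Sop :: "ftop \<Rightarrow> (ftop \<Rightarrow>\<^sub>0 'k::field)" where "Sop t = iL (SL (top_iota t))"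

lemma LE_op: "(\<Sum>U\<in>opens t. alg_mult top_dot (Sop (BB t U)) (bvec (AA t U))) = smul (eps t) (bvec top_one :: _ \<Rightarrow>\<^sub>0 'k::field)"
proof -
  have "(\<Sum>U\<in>opens t. alg_mult top_dot (Sop (BB t U)) (bvec (AA t U)) :: _ \<Rightarrow>\<^sub>0 'k) =
     (\<Sum>U\<in>opens t. iL (alg_mult top_dot (SL (top_iota (BB t U))) (bvec (top_iota (AA t U)))))"
    by (rule sum.cong[OF refl]) (simp add: iL_alg Sop_def)
  also have "\<dots> = iL (lin (\<lambda>(a, b). alg_mult top_dot (SL a) (bvec b)) (top_delta (top_iota t)))"
    by (simp add: delta_iota lin_sum)
  also have "\<dots> = iL (smul (eps (top_iota t)) (bvec top_one))"
    by (simp only: lin_delta prod.case LE)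
  also have "\<dots> = smul (eps t) (bvec top_one)" by (simp add: lin_smul)
  finally show ?thesis .
qed

lemma RE_op: "(\<Sum>U\<in>opens t. alg_mult top_dot (bvec (BB t U)) (Sop (AA t U))) = smul (eps t) (bvec top_one :: _ \<Rightarrow>\<^sub>0 'k::field)"
proof -
  have "(\<Sum>U\<in>opens t. alg_mult top_dot (bvec (BB t U)) (Sop (AA t U)) :: _ \<Rightarrow>\<^sub>0 'k) =
     (\<Sum>U\<in>opens t. iL (alg_mult top_dot (bvec (top_iota (BB t U))) (SL (top_iota (AA t U)))))"
    by (rule sum.cong[OF refl]) (simp add: iL_alg Sop_def)
  also have "\<dots> = iL (lin (\<lambda>(a, b). alg_mult top_dot (bvec a) (SL b)) (top_delta (top_iota t)))"
    by (simp add: delta_iota lin_sum)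
  also have "\<dots> = iL (smul (eps (top_iota t)) (bvec top_one))"
    by (simp only: lin_delta prod.case RE')
  also have "\<dots> = smul (eps t) (bvec top_one)" by (simp add: lin_smul)
  finally show ?thesis .
qed

lemma hopf_delta_op: "hopf_algebra top_dot top_one (top_delta_op :: ftop \<Rightarrow> (ftop \<times> ftop \<Rightarrow>\<^sub>0 'k::field))"
  unfolding hopf_algebra_def
proof (intro conjI exI[of _ eps] exI[of _ Sop] allI)
  show "bialgebra top_dot top_one (top_delta_op :: ftop \<Rightarrow> (ftop \<times> ftop \<Rightarrow>\<^sub>0 'k))" by (rule bialg_delta_op)
  show "is_counit (top_delta_op :: ftop \<Rightarrow> (ftop \<times> ftop \<Rightarrow>\<^sub>0 'k)) eps" by (rule counit_delta_op)
  fix x :: "_ \<Rightarrow>\<^sub>0 'k"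
  show "lin (\<lambda>(a, b). alg_mult top_dot (Sop a) (bvec b)) (lin top_delta_op x) = smul (linfun eps x) (bvec top_one)"
    unfolding lin_lin smul_linfun by (rule lin_ext) (simp only: lin_delta_op prod.case LE_op)
  show "lin (\<lambda>(a, b). alg_mult top_dot (bvec a) (Sop b)) (lin top_delta_op x) = smul (linfun eps x) (bvec top_one)"
    unfolding lin_lin smul_linfun by (rule lin_ext) (simp only: lin_delta_op prod.case RE_op)
qed

lemma iso_delta: "tmap iL iL (lin top_delta x) = lin top_delta_op (iL (x :: _ \<Rightarrow>\<^sub>0 'k::field))"
proof -
  have "\<And>t. (tmap iL iL (top_delta t) :: _ \<Rightarrow>\<^sub>0 'k) = top_delta_op (top_iota t)"
  proof -
    fix t
    have "(tmap iL iL (top_delta t) :: _ \<Rightarrow>\<^sub>0 'k) = (\<Sum>U\<in>opens t. bvec (top_iota (AA t U), top_iota (BB t U)))"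
      unfolding tmap_def by (simp add: lin_delta)
    also have "\<dots> = top_delta_op (top_iota t)"
      unfolding top_delta_op_def delta_iota tflip_def by (simp add: lin_sum)
    finally show "(tmap iL iL (top_delta t) :: _ \<Rightarrow>\<^sub>0 'k) = top_delta_op (top_iota t)" .
  qed
  then show ?thesis by (simp add: tmap_lin lin_lin)
qed

lemma bij_iL: "bij (iL :: (ftop \<Rightarrow>\<^sub>0 'k::field) \<Rightarrow> _)"
  by (rule o_bij[of iL]) (auto simp: fun_eq_iff)

theorem proposition6:
  shows "(hopf_algebra top_dot top_one (top_delta :: ftop \<Rightarrow> (ftop \<times> ftop \<Rightarrow>\<^sub>0 'k::field))
            \<and> graded deg top_dot top_one (top_delta :: ftop \<Rightarrow> (ftop \<times> ftop \<Rightarrow>\<^sub>0 'k)))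
       \<and> (infinitesimal_bialgebra top_down top_one (top_delta :: ftop \<Rightarrow> (ftop \<times> ftop \<Rightarrow>\<^sub>0 'k))
            \<and> graded deg top_down top_one (top_delta :: ftop \<Rightarrow> (ftop \<times> ftop \<Rightarrow>\<^sub>0 'k)))
       \<and> hopf_iso top_dot top_one (top_delta :: ftop \<Rightarrow> (ftop \<times> ftop \<Rightarrow>\<^sub>0 'k))
            top_dot top_one top_delta_op (\<lambda>t. bvec (top_iota t))"
proof (intro conjI)
  show "hopf_algebra top_dot top_one (top_delta :: ftop \<Rightarrow> (ftop \<times> ftop \<Rightarrow>\<^sub>0 'k))" by (rule hopf_delta)
  show "graded deg top_dot top_one (top_delta :: ftop \<Rightarrow> (ftop \<times> ftop \<Rightarrow>\<^sub>0 'k))" by (rule graded_dot)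
  show "infinitesimal_bialgebra top_down top_one (top_delta :: ftop \<Rightarrow> (ftop \<times> ftop \<Rightarrow>\<^sub>0 'k))" by (rule infinitesimal)
  show "graded deg top_down top_one (top_delta :: ftop \<Rightarrow> (ftop \<times> ftop \<Rightarrow>\<^sub>0 'k))" by (rule graded_down)
  show "hopf_iso top_dot top_one (top_delta :: ftop \<Rightarrow> (ftop \<times> ftop \<Rightarrow>\<^sub>0 'k))
            top_dot top_one top_delta_op (\<lambda>t. bvec (top_iota t))"
    unfolding hopf_iso_def
  proof (intro conjI allI)
    show "hopf_algebra top_dot top_one (top_delta :: ftop \<Rightarrow> (ftop \<times> ftop \<Rightarrow>\<^sub>0 'k))" by (rule hopf_delta)
    show "hopf_algebra top_dot top_one (top_delta_op :: ftop \<Rightarrow> (ftop \<times> ftop \<Rightarrow>\<^sub>0 'k))" by (rule hopf_delta_op)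
    show "bij (iL :: (ftop \<Rightarrow>\<^sub>0 'k) \<Rightarrow> _)" by (rule bij_iL)
    fix x y :: "ftop \<Rightarrow>\<^sub>0 'k"
    show "iL (alg_mult top_dot x y) = alg_mult top_dot (iL x) (iL y)" by (rule iL_alg)
    show "tmap iL iL (lin top_delta x) = lin top_delta_op (iL x)" by (rule iso_delta)
  next
    show "(iL (bvec top_one) :: ftop \<Rightarrow>\<^sub>0 'k) = bvec top_one" by simp
  qed
qed

end
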